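(* For each positive integer $k$ and each positive rational number $s$, there are only finitely many (isomorphism classes of) connected graphs $X$ with maximum valency at most $k$ for which there exist distinct vertices $a,b$ of $X$ such that the $s$-pair state $\mathbf e_a+s\mathbf e_b$ is periodic in $X$ with respect to the Hamiltonian $A$; the same holds with $A$ replaced by $L$, and with $A$ replaced by $Q$.
   Context: Graphs are simple, undirected, unweighted. $A$, $L=D-A$, $Q=D+A$ are the adjacency, Laplacian and signless Laplacian matrices. For a real symmetric Hamiltonian $M$, $U(t)=e^{-\mathrm{i}tM}$. A vector $\mathbf u$ is periodic (at time $\tau>0$) if $U(\tau)\mathbf u=\eta\mathbf u$ for some complex $\eta$ with $|\eta|=1$. For distinct vertices $a,b$ and nonzero $s$, the vector $\mathbf e_a+s\mathbf e_b$ is called an $s$-pair state. *)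

theory Defs
  imports Complex_Main
begin

text \<open>A finite simple graph is represented by a vertex set V (of naturals; every finite
graph is isomorphic to one of this form) and a symmetric irreflexive edge relation E on V.\<close>

type_synonym graph = "nat set \<times> (nat \<Rightarrow> nat \<Rightarrow> bool)"

definition simple_graph :: "nat set \<Rightarrow> (nat \<Rightarrow> nat \<Rightarrow> bool) \<Rightarrow> bool" where
  "simple_graph V E \<longleftrightarrow> finite V \<and> (\<forall>x y. E x y \<longrightarrow> x \<in> V \<and> y \<in> V)
     \<and> (\<forall>x y. E x y \<longrightarrow> E y x) \<and> (\<forall>x. \<not> E x x)"

definition connected_graph :: "nat set \<Rightarrow> (nat \<Rightarrow> nat \<Rightarrow> bool) \<Rightarrow> bool" where
  "connected_graph V E \<longleftrightarrow> (\<forall>x\<in>V. \<forall>y\<in>V. E\<^sup>*\<^sup>* x y)"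

definition degree :: "nat set \<Rightarrow> (nat \<Rightarrow> nat \<Rightarrow> bool) \<Rightarrow> nat \<Rightarrow> nat" where
  "degree V E v = card {u\<in>V. E v u}"

definition max_valency_le :: "nat set \<Rightarrow> (nat \<Rightarrow> nat \<Rightarrow> bool) \<Rightarrow> nat \<Rightarrow> bool" where
  "max_valency_le V E k \<longleftrightarrow> (\<forall>v\<in>V. degree V E v \<le> k)"

definition graph_iso :: "graph \<Rightarrow> graph \<Rightarrow> bool" where
  "graph_iso G H \<longleftrightarrow> (\<exists>f. bij_betw f (fst G) (fst H) \<and>
     (\<forall>x\<in>fst G. \<forall>y\<in>fst G. snd G x y \<longleftrightarrow> snd H (f x) (f y)))"

definition adj_mat :: "nat set \<Rightarrow> (nat \<Rightarrow> nat \<Rightarrow> bool) \<Rightarrow> nat \<Rightarrow> nat \<Rightarrow> complex" where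
  "adj_mat V E i j = (if E i j then 1 else 0)"

definition deg_mat :: "nat set \<Rightarrow> (nat \<Rightarrow> nat \<Rightarrow> bool) \<Rightarrow> nat \<Rightarrow> nat \<Rightarrow> complex" where
  "deg_mat V E i j = (if i = j then of_nat (degree V E i) else 0)"

definition lap_mat :: "nat set \<Rightarrow> (nat \<Rightarrow> nat \<Rightarrow> bool) \<Rightarrow> nat \<Rightarrow> nat \<Rightarrow> complex" where
  "lap_mat V E i j = deg_mat V E i j - adj_mat V E i j"

definition slap_mat :: "nat set \<Rightarrow> (nat \<Rightarrow> nat \<Rightarrow> bool) \<Rightarrow> nat \<Rightarrow> nat \<Rightarrow> complex" where
  "slap_mat V E i j = deg_mat V E i j + adj_mat V E i j"

fun mat_pow :: "nat set \<Rightarrow> (nat \<Rightarrow> nat \<Rightarrow> complex) \<Rightarrow> nat \<Rightarrow> nat \<Rightarrow> nat \<Rightarrow> complex" where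
  "mat_pow V M 0 i j = (if i = j then 1 else 0)"
| "mat_pow V M (Suc m) i j = (\<Sum>l\<in>V. M i l * mat_pow V M m l j)"

definition evol :: "nat set \<Rightarrow> (nat \<Rightarrow> nat \<Rightarrow> complex) \<Rightarrow> real \<Rightarrow> nat \<Rightarrow> nat \<Rightarrow> complex" where
  "evol V M t i j = (\<Sum>m. ((- \<i> * of_real t) ^ m / of_nat (fact m)) * mat_pow V M m i j)"

definition periodic_vec :: "nat set \<Rightarrow> (nat \<Rightarrow> nat \<Rightarrow> complex) \<Rightarrow> (nat \<Rightarrow> complex) \<Rightarrow> bool" where
  "periodic_vec V M u \<longleftrightarrow> (\<exists>\<tau>>0. \<exists>\<eta>. cmod \<eta> = 1 \<and>
      (\<forall>i\<in>V. (\<Sum>j\<in>V. evol V M \<tau> i j * u j) = \<eta> * u i))"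

definition pair_state :: "nat \<Rightarrow> nat \<Rightarrow> real \<Rightarrow> nat \<Rightarrow> complex" where
  "pair_state a b s i = (if i = a then 1 else 0) + (if i = b then of_real s else 0)"

definition has_periodic_pair :: "(nat set \<Rightarrow> (nat \<Rightarrow> nat \<Rightarrow> bool) \<Rightarrow> nat \<Rightarrow> nat \<Rightarrow> complex)
   \<Rightarrow> real \<Rightarrow> nat set \<Rightarrow> (nat \<Rightarrow> nat \<Rightarrow> bool) \<Rightarrow> bool" where
  "has_periodic_pair H s V E \<longleftrightarrow> (\<exists>a\<in>V. \<exists>b\<in>V. a \<noteq> b \<and> periodic_vec V (H V E) (pair_state a b s))"

definition finitely_many_iso_classes :: "(nat set \<Rightarrow> (nat \<Rightarrow> nat \<Rightarrow> bool) \<Rightarrow> bool) \<Rightarrow> bool" where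
  "finitely_many_iso_classes P \<longleftrightarrow> (\<exists>S::graph set. finite S \<and>
     (\<forall>V E. P V E \<longrightarrow> (\<exists>G\<in>S. graph_iso (V, E) G)))"

end

theory Submission
  imports Defs "Jordan_Normal_Form.Char_Poly" "HOL-Computational_Algebra.Fundamental_Theorem_Algebra"
    "HOL-Library.Function_Algebras"
begin

hide_const (open) Determinant.adj_mat


definition mv :: "nat set \<Rightarrow> (nat\<Rightarrow>nat\<Rightarrow>complex) \<Rightarrow> (nat\<Rightarrow>complex) \<Rightarrow> nat \<Rightarrow> complex" where
  "mv V M x = (\<lambda>i. \<Sum>l\<in>V. M i l * x l)"

definition mvp :: "nat set \<Rightarrow> (nat\<Rightarrow>nat\<Rightarrow>complex) \<Rightarrow> nat \<Rightarrow> (nat\<Rightarrow>complex) \<Rightarrow> nat \<Rightarrow> complex" where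
  "mvp V M j x = (mv V M ^^ j) x"

fun pvl :: "nat set \<Rightarrow> (nat\<Rightarrow>nat\<Rightarrow>complex) \<Rightarrow> complex list \<Rightarrow> (nat\<Rightarrow>complex) \<Rightarrow> nat \<Rightarrow> complex" where
  "pvl V M [] x = (\<lambda>_. 0)"
| "pvl V M (a # as) x = (\<lambda>i. a * x i + mv V M (pvl V M as x) i)"

definition pv :: "nat set \<Rightarrow> (nat\<Rightarrow>nat\<Rightarrow>complex) \<Rightarrow> complex poly \<Rightarrow> (nat\<Rightarrow>complex) \<Rightarrow> nat \<Rightarrow> complex" where
  "pv V M p x = pvl V M (coeffs p) x"

lemma mv_zero[simp]: "mv V M (\<lambda>_. 0) = (\<lambda>_. 0)"
  by (simp add: mv_def)

lemma mv_add: "mv V M (\<lambda>i. x i + y i) = (\<lambda>i. mv V M x i + mv V M y i)"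
  by (simp add: mv_def algebra_simps sum.distrib)

lemma mv_scale: "mv V M (\<lambda>i. c * x i) = (\<lambda>i. c * mv V M x i)"
  by (simp add: mv_def algebra_simps sum_distrib_left)

lemma mv_sum: "finite A \<Longrightarrow> mv V M (\<lambda>i. \<Sum>a\<in>A. f a i) = (\<lambda>i. \<Sum>a\<in>A. mv V M (f a) i)"
  unfolding mv_def fun_eq_iff sum_distrib_left by (intro allI sum.swap)

lemma mvp_0[simp]: "mvp V M 0 x = x" by (simp add: mvp_def)
lemma mvp_Suc: "mvp V M (Suc j) x = mv V M (mvp V M j x)" by (simp add: mvp_def)
lemma mvp_Suc': "mvp V M (Suc j) x = mvp V M j (mv V M x)" by (simp add: mvp_def funpow_Suc_right del: funpow.simps)
lemma mvp_add: "mvp V M (j + m) x = mvp V M j (mvp V M m x)" by (simp add: mvp_def funpow_add)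

lemma mvp_lin_add: "mvp V M j (\<lambda>i. x i + y i) = (\<lambda>i. mvp V M j x i + mvp V M j y i)"
  by (induction j) (simp_all add: mvp_Suc mv_add)
lemma mvp_lin_scale: "mvp V M j (\<lambda>i. c * x i) = (\<lambda>i. c * mvp V M j x i)"
  by (induction j) (simp_all add: mvp_Suc mv_scale)
lemma mvp_zero[simp]: "mvp V M j (\<lambda>_. 0) = (\<lambda>_. 0)"
  by (induction j) (simp_all add: mvp_Suc)

lemma pvl_cCons: "pvl V M (cCons a as) x = pvl V M (a # as) x"
  by (cases "as = [] \<and> a = 0") (auto simp: cCons_def)

lemma pv_0[simp]: "pv V M 0 x = (\<lambda>_. 0)" by (simp add: pv_def)

lemma pv_pCons: "pv V M (pCons a p) x = (\<lambda>i. a * x i + mv V M (pv V M p x) i)"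
  by (simp add: pv_def pvl_cCons)

lemma pv_const: "pv V M [:c:] x = (\<lambda>i. c * x i)"
  by (simp add: pv_pCons)

lemma pv_add: "pv V M (p + q) x = (\<lambda>i. pv V M p x i + pv V M q x i)"
  by (induction p q rule: poly_induct2) (simp_all add: pv_pCons mv_add[unfolded fun_eq_iff, rule_format, symmetric] algebra_simps)

lemma pv_smult: "pv V M (Polynomial.smult c p) x = (\<lambda>i. c * pv V M p x i)"
proof (induction p)
  case 0 then show ?case by simp
next
  case (pCons a p)
  show ?case by (simp add: pv_pCons pCons(2) mv_scale[unfolded fun_eq_iff, rule_format, symmetric] algebra_simps)
qed

lemma pv_mult: "pv V M (p * q) x = pv V M p (pv V M q x)"
proof (induction p)
  case 0 then show ?case by simp
next
  case (pCons a p)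
  have "pCons a p * q = Polynomial.smult a q + pCons 0 (p * q)" by simp
  then show ?case by (simp add: pv_add pv_smult pv_pCons pCons(2))
qed

lemma pv_lin_add: "pv V M p (\<lambda>i. x i + y i) = (\<lambda>i. pv V M p x i + pv V M p y i)"
proof (induction p)
  case 0 then show ?case by simp
next
  case (pCons a p)
  show ?case by (simp add: pv_pCons pCons(2) mv_add[unfolded fun_eq_iff, rule_format] algebra_simps)
qed

lemma pv_lin_scale: "pv V M p (\<lambda>i. c * x i) = (\<lambda>i. c * pv V M p x i)"
proof (induction p)
  case 0 then show ?case by simp
next
  case (pCons a p)
  show ?case by (simp add: pv_pCons pCons(2) mv_scale[unfolded fun_eq_iff, rule_format] algebra_simps)
qed

lemma pv_zero_vec[simp]: "pv V M p (\<lambda>_. 0) = (\<lambda>_. 0)"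
  using pv_lin_scale[of V M p 0 "\<lambda>_. 0"] by simp

lemma pv_X: "pv V M [:0,1:] x = mv V M x"
  by (simp add: pv_pCons)

lemma pv_mv: "pv V M p (mv V M x) = mv V M (pv V M p x)"
proof -
  have A: "pv V M (p * [:0,1:]) x = pv V M p (mv V M x)" by (simp only: pv_mult pv_X)
  have B: "pv V M ([:0,1:] * p) x = mv V M (pv V M p x)" by (simp only: pv_mult pv_X)
  show ?thesis using A B by (simp add: mult.commute)
qed

lemma pv_sum_coeff: "pv V M p x = (\<lambda>i. \<Sum>k\<le>degree p. coeff p k * mvp V M k x i)"
proof (induction p)
  case 0 then show ?case by simp
next
  case (pCons a p)
  show ?case
  proof (cases "p = 0")
    case True then show ?thesis by (simp add: pv_pCons)
  next
    case False
    have "pv V M (pCons a p) x = (\<lambda>i. a * x i + mv V M (\<lambda>i. \<Sum>k\<le>degree p. coeff p k * mvp V M k x i) i)"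
      by (simp add: pv_pCons pCons(2))
    also have "\<dots> = (\<lambda>i. a * x i + (\<Sum>k\<le>degree p. coeff p k * mvp V M (Suc k) x i))"
      by (simp add: mv_sum mv_scale[unfolded fun_eq_iff, rule_format] mvp_Suc)
    also have "\<dots> = (\<lambda>i. \<Sum>k\<le>Suc (degree p). coeff (pCons a p) k * mvp V M k x i)"
      by (subst sum.atMost_Suc_shift) simp
    also have "\<dots> = (\<lambda>i. \<Sum>k\<le>degree (pCons a p). coeff (pCons a p) k * mvp V M k x i)"
      using False by simp
    finally show ?thesis .
  qed
qed


definition cm :: "real \<Rightarrow> nat \<Rightarrow> complex" where
  "cm t m = (- \<i> * of_real t) ^ m / of_nat (fact m)"

definition Uv :: "nat set \<Rightarrow> (nat\<Rightarrow>nat\<Rightarrow>complex) \<Rightarrow> real \<Rightarrow> (nat\<Rightarrow>complex) \<Rightarrow> nat \<Rightarrow> complex" where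
  "Uv V M t x = (\<lambda>i. \<Sum>m. cm t m * mvp V M m x i)"

lemma norm_cm: "norm (cm t m) = \<bar>t\<bar> ^ m / fact m"
  by (simp add: cm_def norm_divide norm_power norm_mult)

lemma summable_expbound: "summable (\<lambda>m. \<bar>t\<bar> ^ m / fact m * (C ^ m * X + Y) :: real)"
proof -
  have a: "summable (\<lambda>m. inverse (fact m) * (\<bar>t\<bar> * C) ^ m :: real)" by (rule summable_exp)
  have b: "summable (\<lambda>m. inverse (fact m) * (\<bar>t\<bar>) ^ m :: real)" by (rule summable_exp)
  have "summable (\<lambda>m. X * (inverse (fact m) * (\<bar>t\<bar> * C) ^ m) + Y * (inverse (fact m) * (\<bar>t\<bar>) ^ m) :: real)"
    by (intro summable_add summable_mult a b)
  then show ?thesis by (simp add: algebra_simps power_mult_distrib divide_inverse)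
qed

locale bnd =
  fixes V :: "nat set" and M :: "nat\<Rightarrow>nat\<Rightarrow>complex" and C :: real
  assumes finV: "finite V" and rowb: "\<And>i. (\<Sum>l\<in>V. cmod (M i l)) \<le> C"
begin

lemma C_nonneg: "C \<ge> 0"
  using rowb[of 0] sum_nonneg[of V "\<lambda>l. cmod (M 0 l)"] by auto

lemma mvp_bound_V: "l \<in> V \<Longrightarrow> cmod (mvp V M m x l) \<le> C ^ m * (\<Sum>l\<in>V. cmod (x l))"
proof (induction m arbitrary: l)
  case 0
  then show ?case using finV by (simp, intro member_le_sum) auto
next
  case (Suc m)
  have "cmod (mvp V M (Suc m) x l) \<le> (\<Sum>l'\<in>V. cmod (M l l') * cmod (mvp V M m x l'))"
    unfolding mvp_Suc mv_def by (rule order.trans[OF norm_sum]) (simp add: norm_mult)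
  also have "\<dots> \<le> (\<Sum>l'\<in>V. cmod (M l l') * (C ^ m * (\<Sum>l\<in>V. cmod (x l))))"
    by (intro sum_mono mult_left_mono Suc.IH) auto
  also have "\<dots> = (\<Sum>l'\<in>V. cmod (M l l')) * (C ^ m * (\<Sum>l\<in>V. cmod (x l)))"
    by (simp add: sum_distrib_right)
  also have "\<dots> \<le> C * (C ^ m * (\<Sum>l\<in>V. cmod (x l)))"
    by (intro mult_right_mono rowb) (simp add: C_nonneg sum_nonneg)
  finally show ?case by simp
qed

lemma mvp_bound: "cmod (mvp V M m x i) \<le> C ^ m * (\<Sum>l\<in>V. cmod (x l)) + cmod (x i)"
proof (cases m)
  case 0 then show ?thesis by (simp add: sum_nonneg)
next
  case (Suc m')
  have "cmod (mvp V M (Suc m') x i) \<le> (\<Sum>l'\<in>V. cmod (M i l') * cmod (mvp V M m' x l'))"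
    unfolding mvp_Suc mv_def by (rule order.trans[OF norm_sum]) (simp add: norm_mult)
  also have "\<dots> \<le> (\<Sum>l'\<in>V. cmod (M i l') * (C ^ m' * (\<Sum>l\<in>V. cmod (x l))))"
    by (intro sum_mono mult_left_mono mvp_bound_V) auto
  also have "\<dots> = (\<Sum>l'\<in>V. cmod (M i l')) * (C ^ m' * (\<Sum>l\<in>V. cmod (x l)))"
    by (simp add: sum_distrib_right)
  also have "\<dots> \<le> C * (C ^ m' * (\<Sum>l\<in>V. cmod (x l)))"
    by (intro mult_right_mono rowb) (simp add: C_nonneg sum_nonneg)
  finally have "cmod (mvp V M m x i) \<le> C ^ m * (\<Sum>l\<in>V. cmod (x l))" using Suc by (simp add: mult.assoc)
  then show ?thesis by (smt (verit) norm_ge_zero)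
qed

lemma summable_U: "summable (\<lambda>m. cm t m * mvp V M m x i)"
proof (rule summable_comparison_test'[OF summable_expbound[of t C "\<Sum>l\<in>V. cmod (x l)" "cmod (x i)"]])
  fix m :: nat
  show "norm (cm t m * mvp V M m x i) \<le> \<bar>t\<bar> ^ m / fact m * (C ^ m * (\<Sum>l\<in>V. cmod (x l)) + cmod (x i))"
    unfolding norm_mult norm_cm by (intro mult_left_mono mvp_bound) auto
qed

lemma Uv_add: "Uv V M t (\<lambda>i. x i + y i) = (\<lambda>i. Uv V M t x i + Uv V M t y i)"
  unfolding Uv_def mvp_lin_add
  by (simp add: suminf_add[OF summable_U summable_U] algebra_simps)

lemma Uv_scale: "Uv V M t (\<lambda>i. c * x i) = (\<lambda>i. c * Uv V M t x i)"
  unfolding Uv_def mvp_lin_scale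
  using suminf_mult[OF summable_U, of c]
  by (simp add: algebra_simps)

lemma Uv_zero: "Uv V M t (\<lambda>_. 0) = (\<lambda>_. 0)"
  unfolding Uv_def by simp

lemma Uv_mv: "Uv V M t (mv V M x) = mv V M (Uv V M t x)"
proof
  fix i
  have "mv V M (Uv V M t x) i = (\<Sum>l\<in>V. (\<Sum>m. M i l * (cm t m * mvp V M m x l)))"
    unfolding mv_def Uv_def by (intro sum.cong refl suminf_mult[symmetric] summable_U)
  also have "\<dots> = (\<Sum>m. \<Sum>l\<in>V. M i l * (cm t m * mvp V M m x l))"
    by (rule suminf_sum[symmetric]) (intro summable_mult summable_U)
  also have "\<dots> = (\<Sum>m. cm t m * mvp V M m (mv V M x) i)"
  proof (rule arg_cong[where f=suminf])
    have eq: "mvp V M m (mv V M x) = mv V M (mvp V M m x)" for m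
      by (simp add: mvp_Suc[symmetric] mvp_Suc')
    show "(\<lambda>m. \<Sum>l\<in>V. M i l * (cm t m * mvp V M m x l)) = (\<lambda>m. cm t m * mvp V M m (mv V M x) i)"
      unfolding eq by (auto simp: mv_def sum_distrib_left algebra_simps)
  qed
  finally show "Uv V M t (mv V M x) i = mv V M (Uv V M t x) i" by (simp add: Uv_def)
qed

lemma Uv_pv: "Uv V M t (pv V M p x) = pv V M p (Uv V M t x)"
proof (induction p)
  case 0 then show ?case by (simp add: Uv_zero)
next
  case (pCons a p)
  show ?case
    by (simp add: pv_pCons Uv_add Uv_scale Uv_mv pCons(2))
qed

lemma Uv_eig:
  assumes "mv V M v = (\<lambda>i. \<theta> * v i)"
  shows "Uv V M t v i = exp (- \<i> * of_real t * \<theta>) * v i"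
proof -
  have m: "mvp V M m v = (\<lambda>i. \<theta> ^ m * v i)" for m
  proof (induction m)
    case 0 then show ?case by simp
  next
    case (Suc m)
    have "mvp V M (Suc m) v = mv V M (\<lambda>i. \<theta> ^ m * v i)" by (simp add: mvp_Suc Suc)
    also have "\<dots> = (\<lambda>i. \<theta> ^ m * mv V M v i)" by (rule mv_scale)
    also have "\<dots> = (\<lambda>i. \<theta> ^ Suc m * v i)" by (simp only: assms) (simp add: fun_eq_iff algebra_simps)
    finally show ?case .
  qed
  have "(\<lambda>m. (- \<i> * of_real t * \<theta>) ^ m /\<^sub>R fact m) sums exp (- \<i> * of_real t * \<theta>)"
    by (rule exp_converges)
  then have "(\<lambda>m. v i * ((- \<i> * of_real t * \<theta>) ^ m /\<^sub>R fact m)) sums (v i * exp (- \<i> * of_real t * \<theta>))"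
    by (rule sums_mult)
  moreover have "(\<lambda>m. v i * ((- \<i> * of_real t * \<theta>) ^ m /\<^sub>R fact m)) = (\<lambda>m. cm t m * mvp V M m v i)"
  proof
    fix m
    have "(- \<i> * of_real t * \<theta>) ^ m = (- \<i> * of_real t) ^ m * \<theta> ^ m" by (rule power_mult_distrib)
    then show "v i * ((- \<i> * of_real t * \<theta>) ^ m /\<^sub>R fact m) = cm t m * mvp V M m v i"
      by (simp add: m cm_def scaleR_conv_of_real divide_inverse)
  qed
  ultimately show ?thesis unfolding Uv_def by (simp add: sums_iff mult.commute)
qed

lemma mat_pow_bound: "cmod (mat_pow V M m i j) \<le> C ^ m"
proof (induction m arbitrary: i)
  case 0 then show ?case by simp
next
  case (Suc m)
  have "cmod (mat_pow V M (Suc m) i j) \<le> (\<Sum>l\<in>V. cmod (M i l) * cmod (mat_pow V M m l j))"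
    by (simp, rule order.trans[OF norm_sum]) (simp add: norm_mult)
  also have "\<dots> \<le> (\<Sum>l\<in>V. cmod (M i l) * C ^ m)"
    using Suc.IH by (intro sum_mono mult_left_mono) auto
  also have "\<dots> = (\<Sum>l\<in>V. cmod (M i l)) * C ^ m"
    by (simp add: sum_distrib_right)
  also have "\<dots> \<le> C * C ^ m"
    by (intro mult_right_mono rowb) (simp add: C_nonneg)
  finally show ?case by simp
qed

lemma summable_evol: "summable (\<lambda>m. cm t m * mat_pow V M m i j)"
proof (rule summable_comparison_test'[OF summable_expbound[of t C 1 0]])
  fix m :: nat
  show "norm (cm t m * mat_pow V M m i j) \<le> \<bar>t\<bar> ^ m / fact m * (C ^ m * 1 + 0)"
    unfolding norm_mult norm_cm using mat_pow_bound[of m i j] by (intro mult_left_mono) auto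
qed

lemma mat_pow_mvp: "i \<in> V \<Longrightarrow> (\<Sum>j\<in>V. mat_pow V M m i j * x j) = mvp V M m x i"
proof (induction m arbitrary: i)
  case 0
  have "(\<Sum>j\<in>V. mat_pow V M 0 i j * x j) = (\<Sum>j\<in>V. if i = j then x j else 0)"
    by (rule sum.cong) auto
  then show ?case using finV 0 by simp
next
  case (Suc m)
  have "(\<Sum>j\<in>V. mat_pow V M (Suc m) i j * x j) = (\<Sum>l\<in>V. M i l * (\<Sum>j\<in>V. mat_pow V M m l j * x j))"
    by (simp add: sum_distrib_right sum_distrib_left algebra_simps) (rule sum.swap)
  also have "\<dots> = (\<Sum>l\<in>V. M i l * mvp V M m x l)"
    by (intro sum.cong refl) (simp add: Suc.IH)
  finally show ?case by (simp add: mvp_Suc mv_def)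
qed

lemma evol_Uv: "i \<in> V \<Longrightarrow> (\<Sum>j\<in>V. evol V M t i j * x j) = Uv V M t x i"
proof -
  assume i: "i \<in> V"
  have "(\<Sum>j\<in>V. evol V M t i j * x j) = (\<Sum>j\<in>V. \<Sum>m. cm t m * mat_pow V M m i j * x j)"
    unfolding evol_def cm_def[symmetric]
    by (intro sum.cong refl) (simp add: suminf_mult2[OF summable_evol])
  also have "\<dots> = (\<Sum>m. \<Sum>j\<in>V. cm t m * mat_pow V M m i j * x j)"
    by (rule suminf_sum[symmetric]) (intro summable_mult2 summable_evol)
  also have "\<dots> = (\<Sum>m. cm t m * mvp V M m x i)"
    by (simp add: mat_pow_mvp[OF i, symmetric] sum_distrib_left algebra_simps)
  finally show ?thesis by (simp add: Uv_def)
qed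

end

definition fsc :: "complex \<Rightarrow> (nat \<Rightarrow> complex) \<Rightarrow> nat \<Rightarrow> complex" where
  "fsc c f = (\<lambda>i. c * f i)"

interpretation fvs: vector_space fsc
  by unfold_locales (auto simp: fsc_def fun_eq_iff algebra_simps plus_fun_def)

lemma sum_apply_fun: "(\<Sum>a\<in>A. f a) (i::nat) = (\<Sum>a\<in>A. f a i :: complex)"
  by (induction A rule: infinite_finite_induct) (auto simp: zero_fun_def plus_fun_def)

definition supp_vec :: "nat set \<Rightarrow> (nat \<Rightarrow> complex) \<Rightarrow> bool" where
  "supp_vec V x \<longleftrightarrow> (\<forall>i. i \<notin> V \<longrightarrow> x i = 0)"

definition supp_mat :: "nat set \<Rightarrow> (nat\<Rightarrow>nat\<Rightarrow>complex) \<Rightarrow> bool" where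
  "supp_mat V M \<longleftrightarrow> (\<forall>i l. i \<notin> V \<longrightarrow> M i l = 0)"

lemma supp_mv: "supp_mat V M \<Longrightarrow> supp_vec V (mv V M x)"
  by (simp add: supp_mat_def supp_vec_def mv_def)

lemma supp_mvp: "supp_mat V M \<Longrightarrow> supp_vec V x \<Longrightarrow> supp_vec V (mvp V M j x)"
  by (cases j) (simp_all add: mvp_Suc supp_mv)

lemma supp_pv: "supp_mat V M \<Longrightarrow> supp_vec V x \<Longrightarrow> supp_vec V (pv V M p x)"
  by (cases p) (auto simp: pv_pCons supp_vec_def supp_mat_def mv_def)

lemma pv_monom: "pv V M (monom c j) x = (\<lambda>i. c * mvp V M j x i)"
proof (induction j)
  case 0 then show ?case by (simp add: monom_0 pv_const)
next
  case (Suc j)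
  show ?case by (simp add: monom_Suc pv_pCons Suc mv_scale mvp_Suc)
qed

lemma pv_sumP: "finite A \<Longrightarrow> pv V M (\<Sum>a\<in>A. f a) x = (\<lambda>i. \<Sum>a\<in>A. pv V M (f a) x i)"
  by (induction A rule: finite_induct) (simp_all add: pv_add)

lemma supp_in_span:
  assumes "finite V" "supp_vec V x"
  shows "x \<in> fvs.span ((\<lambda>v. (\<lambda>i. if i = v then 1 else 0)) ` V)"
proof -
  have "x = (\<Sum>v\<in>V. fsc (x v) (\<lambda>i. if i = v then 1 else 0))"
  proof
    fix i
    have "(\<Sum>v\<in>V. fsc (x v) (\<lambda>i. if i = v then 1 else 0)) i = (\<Sum>v\<in>V. if i = v then x v else 0)"
      by (simp add: fsc_def sum_apply_fun, rule sum.cong, auto) 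
    then show "x i = (\<Sum>v\<in>V. fsc (x v) (\<lambda>i. if i = v then 1 else 0)) i"
      using assms by (auto simp: supp_vec_def)
  qed
  also have "\<dots> \<in> fvs.span ((\<lambda>v. (\<lambda>i. if i = v then 1 else 0)) ` V)"
    by (intro fvs.span_sum fvs.span_scale fvs.span_base) auto
  finally show ?thesis .
qed

lemma annihilator_exists:
  assumes fin: "finite V" and sm: "supp_mat V M" and sw: "supp_vec V w"
  shows "\<exists>p. p \<noteq> 0 \<and> pv V M p w = (\<lambda>_. 0)"
proof -
  let ?n = "card V"
  let ?B = "(\<lambda>v. (\<lambda>i. if i = v then 1 else 0 :: complex)) ` V"
  let ?A = "(\<lambda>j. mvp V M j w) ` {..?n}"
  show ?thesis
  proof (cases "inj_on (\<lambda>j. mvp V M j w) {..?n}")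
    case False
    then obtain i j where ij: "i \<le> ?n" "j \<le> ?n" "i \<noteq> j" "mvp V M i w = mvp V M j w"
      unfolding inj_on_def by auto
    let ?p = "monom 1 i - monom 1 j :: complex poly"
    have "coeff ?p i = 1" using ij by (simp add: coeff_monom)
    then have "?p \<noteq> 0" by (metis coeff_0 zero_neq_one)
    moreover have "pv V M ?p w = (\<lambda>_. 0)"
    proof -
      have "monom 1 i = ?p + monom 1 j" by simp
      then have "pv V M (monom 1 i) w = pv V M (?p + monom 1 j) w" by simp
      then have "(\<lambda>x. 1 * mvp V M i w x) = (\<lambda>x. pv V M ?p w x + 1 * mvp V M j w x)"
        by (simp only: pv_add pv_monom)
      then show ?thesis by (simp add: ij(4) fun_eq_iff)
    qed
    ultimately show ?thesis by blast
  next
    case True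
    have "card ?A = Suc ?n" using True by (simp add: card_image)
    have sp: "?A \<subseteq> fvs.span ?B"
      using supp_in_span[OF fin supp_mvp[OF sm sw]] by auto
    have "\<not> fvs.independent ?A"
    proof
      assume "fvs.independent ?A"
      from fvs.independent_span_bound[OF _ this sp] fin
      have "card ?A \<le> card ?B" by auto
      also have "\<dots> \<le> ?n" by (rule card_image_le[OF fin])
      finally show False using \<open>card ?A = Suc ?n\<close> by simp
    qed
    then obtain T u where Tu: "finite T" "T \<subseteq> ?A" "(\<Sum>v\<in>T. fsc (u v) v) = 0" "\<exists>v\<in>T. u v \<noteq> 0"
      unfolding fvs.dependent_explicit by blast
    define J where "J = {j\<in>{..?n}. mvp V M j w \<in> T}"
    have finJ: "finite J" by (simp add: J_def)
    have TJ: "T = (\<lambda>j. mvp V M j w) ` J" using Tu(2) by (auto simp: J_def)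
    have injJ: "inj_on (\<lambda>j. mvp V M j w) J" using True by (rule inj_on_subset) (auto simp: J_def)
    define p where "p = (\<Sum>j\<in>J. monom (u (mvp V M j w)) j)"
    have "pv V M p w = (\<lambda>i. \<Sum>j\<in>J. u (mvp V M j w) * mvp V M j w i)"
      by (simp add: p_def pv_sumP[OF finJ] pv_monom)
    also have "\<dots> = (\<Sum>v\<in>T. fsc (u v) v)"
      by (simp add: TJ sum.reindex[OF injJ] fun_eq_iff fsc_def sum_apply_fun)
    finally have ann: "pv V M p w = (\<lambda>_. 0)" using Tu(3) by (simp add: zero_fun_def)
    from Tu(4) obtain j0 where j0: "j0 \<in> J" "u (mvp V M j0 w) \<noteq> 0" unfolding TJ by auto
    have "coeff p j0 = (\<Sum>j\<in>J. if j0 = j then u (mvp V M j w) else 0)"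
      by (simp add: p_def coeff_sum coeff_monom eq_commute)
    also have "\<dots> = u (mvp V M j0 w)" using finJ j0 by simp
    finally have "p \<noteq> 0" using j0 by auto
    with ann show ?thesis by blast
  qed
qed

lemma minpoly_exists:
  assumes fin: "finite V" and sm: "supp_mat V M" and sw: "supp_vec V w"
  shows "\<exists>q. lead_coeff q = 1 \<and> pv V M q w = (\<lambda>_. 0) \<and>
             (\<forall>p. pv V M p w = (\<lambda>_. 0) \<and> degree p < degree q \<longrightarrow> p = 0)"
proof -
  let ?P = "\<lambda>d. \<exists>p. p \<noteq> 0 \<and> pv V M p w = (\<lambda>_. 0) \<and> degree p = d"
  from annihilator_exists[OF assms] obtain p0 where "p0 \<noteq> 0" "pv V M p0 w = (\<lambda>_. 0)" by blast
  then have "?P (degree p0)" by blast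
  then have "?P (LEAST d. ?P d)" by (rule LeastI)
  then obtain p1 where p1: "p1 \<noteq> 0" "pv V M p1 w = (\<lambda>_. 0)" "degree p1 = (LEAST d. ?P d)" by blast
  define q where "q = Polynomial.smult (inverse (lead_coeff p1)) p1"
  have "lead_coeff q = 1" using p1(1) by (simp add: q_def)
  moreover have "pv V M q w = (\<lambda>_. 0)" using p1 by (simp add: q_def pv_smult)
  moreover have "degree q = degree p1" using p1(1) by (simp add: q_def)
  moreover have "\<forall>p. pv V M p w = (\<lambda>_. 0) \<and> degree p < degree q \<longrightarrow> p = 0"
  proof (intro allI impI)
    fix p assume "pv V M p w = (\<lambda>_. 0) \<and> degree p < degree q"
    with p1 \<open>degree q = degree p1\<close> show "p = 0"
      using not_less_Least[of "degree p" ?P] by auto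
  qed
  ultimately show ?thesis by metis
qed


locale perq = bnd V M C
  for V :: "nat set" and M :: "nat\<Rightarrow>nat\<Rightarrow>complex" and C :: real +
  fixes w :: "nat \<Rightarrow> complex" and \<tau> :: real and \<eta> :: complex and q :: "complex poly"
  assumes sm: "supp_mat V M"
    and sym: "\<And>i l. M i l = M l i"
    and realM: "\<And>i l. cnj (M i l) = M i l"
    and sw: "supp_vec V w"
    and tau: "\<tau> > 0"
    and eta: "cmod \<eta> = 1"
    and per: "Uv V M \<tau> w = (\<lambda>i. \<eta> * w i)"
    and qmon: "lead_coeff q = 1"
    and qann: "pv V M q w = (\<lambda>_. 0)"
    and qmin: "\<And>p. pv V M p w = (\<lambda>_. 0) \<Longrightarrow> degree p < degree q \<Longrightarrow> p = 0"
begin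

lemma q_nz: "q \<noteq> 0" using qmon by auto

lemma nz_supp: "supp_vec V v \<Longrightarrow> v \<noteq> (\<lambda>_. 0) \<Longrightarrow> \<exists>i\<in>V. v i \<noteq> 0"
  by (auto simp: supp_vec_def fun_eq_iff)

lemma factor_nz:
  assumes "q = f * r" "degree f > 0"
  shows "pv V M r w \<noteq> (\<lambda>_. 0)"
proof
  assume a: "pv V M r w = (\<lambda>_. 0)"
  have "f \<noteq> 0" "r \<noteq> 0" using assms q_nz by auto
  then have "degree r < degree q" using assms by (simp add: degree_mult_eq)
  with qmin[OF a] \<open>r \<noteq> 0\<close> show False by simp
qed

lemma root_eig:
  assumes "poly q \<theta> = 0"
  obtains v where "supp_vec V v" "v \<noteq> (\<lambda>_. 0)" "mv V M v = (\<lambda>i. \<theta> * v i)"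
    "exp (- \<i> * of_real \<tau> * \<theta>) = \<eta>"
proof -
  from assms obtain r where qr: "q = [:-\<theta>,1:] * r" unfolding poly_eq_0_iff_dvd by (auto elim: dvdE)
  define v where "v = pv V M r w"
  have vnz: "v \<noteq> (\<lambda>_. 0)" unfolding v_def by (rule factor_nz[OF qr]) simp
  have sv: "supp_vec V v" unfolding v_def by (rule supp_pv[OF sm sw])
  have "pv V M [:-\<theta>,1:] v = (\<lambda>_. 0)" using qann by (simp only: v_def qr pv_mult)
  then have ev: "mv V M v = (\<lambda>i. \<theta> * v i)" by (simp add: pv_pCons fun_eq_iff)
  have "Uv V M \<tau> v = (\<lambda>i. \<eta> * v i)"
    by (simp add: v_def Uv_pv per pv_lin_scale)
  moreover have "Uv V M \<tau> v i = exp (- \<i> * of_real \<tau> * \<theta>) * v i" for i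
    by (rule Uv_eig[OF ev])
  moreover obtain i where "v i \<noteq> 0" using vnz by auto
  ultimately have "exp (- \<i> * of_real \<tau> * \<theta>) = \<eta>" by (metis mult_cancel_right)
  with sv vnz ev show ?thesis using that by blast
qed

lemma root_real:
  assumes "poly q \<theta> = 0"
  shows "Im \<theta> = 0"
proof -
  obtain v where "exp (- \<i> * of_real \<tau> * \<theta>) = \<eta>" using root_eig[OF assms] by blast
  then have "exp (Re (- \<i> * of_real \<tau> * \<theta>)) = 1" using eta by (metis norm_exp_eq_Re)
  then have "\<tau> * Im \<theta> = 0" by simp
  then show ?thesis using tau by simp
qed

lemma cnj_real: "Im \<theta> = 0 \<Longrightarrow> cnj \<theta> = \<theta>"
  by (simp add: complex_eq_iff)

lemma root_simple:
  assumes "poly q \<theta> = 0"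
  shows "order \<theta> q \<le> 1"
proof (rule ccontr)
  assume "\<not> order \<theta> q \<le> 1"
  then have "[:-\<theta>,1:] ^ 2 dvd q" by (subst order_divides) auto
  then obtain r where qr: "q = [:-\<theta>,1:] * ([:-\<theta>,1:] * r)" by (metis dvdE power2_eq_square mult.assoc)
  define z where "z = pv V M r w"
  define y where "y = pv V M ([:-\<theta>,1:] * r) w"
  have ynz: "y \<noteq> (\<lambda>_. 0)" unfolding y_def by (rule factor_nz[OF qr]) simp
  have sy: "supp_vec V y" unfolding y_def by (rule supp_pv[OF sm sw])
  have yz: "y = (\<lambda>i. - \<theta> * z i + mv V M z i)" unfolding y_def z_def pv_mult by (simp add: pv_pCons)
  have "pv V M [:-\<theta>,1:] y = (\<lambda>_. 0)" using qann by (simp only: y_def qr pv_mult)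
  then have ev: "mv V M y = (\<lambda>i. \<theta> * y i)" by (simp add: pv_pCons fun_eq_iff)
  have thr: "cnj \<theta> = \<theta>" using root_real[OF assms] by (rule cnj_real)
  have pt: "cnj (y i) * y i = (\<Sum>l\<in>V. cnj (y i) * M i l * z l) - \<theta> * (cnj (y i) * z i)" for i
  proof -
    have "cnj (y i) * y i = cnj (y i) * (- \<theta> * z i + mv V M z i)" using fun_cong[OF yz, of i] by simp
    then show ?thesis by (simp add: mv_def algebra_simps sum_distrib_left)
  qed
  have "(\<Sum>i\<in>V. cnj (y i) * y i) = (\<Sum>i\<in>V. \<Sum>l\<in>V. cnj (y i) * M i l * z l) - \<theta> * (\<Sum>i\<in>V. cnj (y i) * z i)"
    by (simp add: pt sum_subtractf sum_distrib_left)
  also have "(\<Sum>i\<in>V. \<Sum>l\<in>V. cnj (y i) * M i l * z l) = (\<Sum>l\<in>V. cnj (\<Sum>i\<in>V. M l i * y i) * z l)"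
    by (subst sum.swap) (simp add: sum_distrib_right sum_distrib_left realM sym algebra_simps)
  also have "\<dots> = (\<Sum>l\<in>V. cnj (\<theta> * y l) * z l)"
    using ev by (simp add: mv_def fun_eq_iff)
  also have "\<dots> = \<theta> * (\<Sum>i\<in>V. cnj (y i) * z i)"
    by (simp add: thr sum_distrib_left algebra_simps)
  finally have z: "(\<Sum>i\<in>V. cnj (y i) * y i) = 0" by simp
  have sq: "cnj (y i) * y i = of_real ((cmod (y i))^2)" for i
    using complex_norm_square[of "y i"] by (simp add: mult.commute)
  have "(\<Sum>i\<in>V. cnj (y i) * y i) = of_real (\<Sum>i\<in>V. (cmod (y i))^2)"
    by (simp only: sq of_real_sum)
  with z have "complex_of_real (\<Sum>i\<in>V. (cmod (y i))^2) = 0" by simp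
  then have "(\<Sum>i\<in>V. (cmod (y i))^2) = 0" by (simp only: of_real_eq_0_iff)
  then have "\<forall>i\<in>V. (cmod (y i))^2 = 0" using finV by (subst (asm) sum_nonneg_eq_0_iff) auto
  then have "\<forall>i\<in>V. y i = 0" by simp
  with nz_supp[OF sy ynz] show False by blast
qed

lemma q_rsquarefree: "rsquarefree q"
  unfolding rsquarefree_def
proof (intro conjI allI)
  show "q \<noteq> 0" by (rule q_nz)
  fix a
  show "order a q = 0 \<or> order a q = 1"
  proof (cases "poly q a = 0")
    case True then show ?thesis using root_simple[OF True] by auto
  next
    case False then show ?thesis using q_nz by (simp add: order_root)
  qed
qed

lemma root_bound:
  assumes "poly q \<theta> = 0"
  shows "cmod \<theta> \<le> C"
proof -
  obtain v where v: "supp_vec V v" "v \<noteq> (\<lambda>_. 0)" "mv V M v = (\<lambda>i. \<theta> * v i)"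
    using root_eig[OF assms] by blast
  obtain j where j: "j \<in> V" "v j \<noteq> 0" using nz_supp[OF v(1,2)] by blast
  define m where "m = Max ((\<lambda>i. cmod (v i)) ` V)"
  have mge: "cmod (v l) \<le> m" if "l \<in> V" for l unfolding m_def using finV that by auto
  obtain i where i: "i \<in> V" "cmod (v i) = m"
    unfolding m_def using finV j(1) by (metis (mono_tags, lifting) Max_in empty_iff finite_imageI image_iff image_is_empty)
  have mpos: "m > 0" using mge[OF j(1)] j(2) by (smt (verit) zero_less_norm_iff)
  have "cmod \<theta> * m = cmod (mv V M v i)" using v(3) i by (simp add: norm_mult)
  also have "\<dots> \<le> (\<Sum>l\<in>V. cmod (M i l) * cmod (v l))"
    unfolding mv_def by (rule order.trans[OF norm_sum]) (simp add: norm_mult)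
  also have "\<dots> \<le> (\<Sum>l\<in>V. cmod (M i l) * m)"
    using mge by (intro sum_mono mult_left_mono) auto
  also have "\<dots> = (\<Sum>l\<in>V. cmod (M i l)) * m" by (simp add: sum_distrib_right)
  also have "\<dots> \<le> C * m" using rowb mpos by (intro mult_right_mono) auto
  finally show ?thesis using mpos by simp
qed

end

definition qs :: "rat \<Rightarrow> complex \<Rightarrow> complex" where "qs r z = of_rat r * z"

interpretation qvs: vector_space qs
  by unfold_locales (auto simp: qs_def algebra_simps of_rat_add of_rat_mult)

interpretation rvs: vector_space "(*) :: rat \<Rightarrow> rat \<Rightarrow> rat"
  by unfold_locales (auto simp: algebra_simps)

interpretation qpair: vector_space_pair qs "(*) :: rat \<Rightarrow> rat \<Rightarrow> rat" ..

lemma phi_exists: "\<exists>g::complex \<Rightarrow> rat. (\<forall>x y. g (x + y) = g x + g y) \<and> (\<forall>r x. g (of_rat r * x) = r * g x) \<and> g 1 = 1"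
proof -
  have "qvs.independent {1::complex}" by simp
  from qpair.linear_independent_extend[OF this, of "\<lambda>_. 1"]
  obtain g where g: "Vector_Spaces.linear qs (*) g" "g 1 = 1" by auto
  then show ?thesis unfolding Vector_Spaces.linear_iff qs_def by blast
qed

lemma pv_sum_coeff_N: "degree p \<le> N \<Longrightarrow> pv V M p x = (\<lambda>i. \<Sum>k\<le>N. coeff p k * mvp V M k x i)"
proof -
  assume N: "degree p \<le> N"
  have "(\<Sum>k\<le>N. coeff p k * mvp V M k x i) = (\<Sum>k\<le>degree p. coeff p k * mvp V M k x i)" for i
    using N by (intro sum.mono_neutral_right) (auto simp: coeff_eq_0)
  then show ?thesis by (simp add: pv_sum_coeff)
qed

lemma pv_diff: "pv V M (p - q) x = (\<lambda>i. pv V M p x i - pv V M q x i)"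
proof -
  have "p - q = p + Polynomial.smult (-1) q" by simp
  then show ?thesis by (simp only: pv_add pv_smult) simp
qed

context perq
begin

lemma q_rat:
  assumes Mrat: "\<And>i l. M i l \<in> \<rat>" and wrat: "\<And>i. w i \<in> \<rat>"
  shows "coeff q k \<in> \<rat>"
proof -
  obtain g :: "complex \<Rightarrow> rat" where gadd: "\<And>x y. g (x + y) = g x + g y"
    and gsc: "\<And>r x. g (of_rat r * x) = r * g x" and g1: "g 1 = 1"
    using phi_exists by blast
  have g0: "g 0 = 0" using gadd[of 0 0] by simp
  have gsum: "g (\<Sum>a\<in>A. f a) = (\<Sum>a\<in>A. g (f a))" for A and f :: "nat \<Rightarrow> complex"
    by (induction A rule: infinite_finite_induct) (auto simp: g0 gadd)
  have mrat: "mvp V M j w i \<in> \<rat>" for j i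
  proof (induction j arbitrary: i)
    case 0 then show ?case using wrat by simp
  next
    case (Suc j) then show ?case using Mrat by (auto simp: mvp_Suc mv_def)
  qed
  define f where "f = (\<lambda>c. of_rat (g c) :: complex)"
  have f0: "f 0 = 0" by (simp add: f_def g0)
  define p where "p = map_poly f q"
  have cp: "coeff p k = f (coeff q k)" for k by (simp add: p_def coeff_map_poly f0)
  have dp: "degree p \<le> degree q" by (simp add: p_def map_poly_degree_leq)
  have "pv V M p w i = 0" for i
  proof -
    have "pv V M p w i = (\<Sum>k\<le>degree q. f (coeff q k) * mvp V M k w i)"
      by (simp add: pv_sum_coeff_N[OF dp] cp)
    also have "\<dots> = (\<Sum>k\<le>degree q. of_rat (g (mvp V M k w i * coeff q k)))"
    proof (intro sum.cong refl)
      fix k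
      obtain \<rho> where rho: "mvp V M k w i = of_rat \<rho>" using mrat[of k i] by (auto elim: Rats_cases)
      show "f (coeff q k) * mvp V M k w i = of_rat (g (mvp V M k w i * coeff q k))"
        by (simp add: rho gsc f_def of_rat_mult)
    qed
    also have "\<dots> = of_rat (g (\<Sum>k\<le>degree q. coeff q k * mvp V M k w i))"
      by (simp add: gsum of_rat_sum mult.commute)
    also have "\<dots> = of_rat (g (pv V M q w i))" by (simp add: pv_sum_coeff)
    also have "\<dots> = 0" by (simp add: qann g0)
    finally show ?thesis .
  qed
  then have pz: "pv V M (p - q) w = (\<lambda>_. 0)" by (simp add: pv_diff qann)
  have "p - q = 0"
  proof (rule ccontr)
    assume nz: "p - q \<noteq> 0"
    have dle: "degree (p - q) \<le> degree q" using dp by (intro degree_diff_le) auto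
    have "coeff (p - q) (degree q) = 0" using qmon by (simp add: cp f_def g1)
    then have "degree (p - q) \<noteq> degree q" using nz by (metis leading_coeff_0_iff)
    with dle have "degree (p - q) < degree q" by simp
    with qmin[OF pz] nz show False by simp
  qed
  then have "coeff q k = f (coeff q k)" using cp by simp
  then show ?thesis by (simp add: f_def) (metis Rats_of_rat)
qed

end

lemma eig_int_algint:
  fixes I :: "'a set" and N :: "'a \<Rightarrow> 'a \<Rightarrow> int" and x :: "'a \<Rightarrow> complex"
  assumes fin: "finite I" and i0: "i0 \<in> I" "x i0 \<noteq> 0"
    and ev: "\<And>i. i \<in> I \<Longrightarrow> (\<Sum>l\<in>I. of_int (N i l) * x l) = lam * x i"
  shows "algebraic_int lam"
proof -
  obtain xs where xs: "set xs = I" "distinct xs" using finite_distinct_list[OF fin] by blast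
  define n where "n = length xs"
  define A :: "int mat" where "A = mat n n (\<lambda>(i,j). N (xs!i) (xs!j))"
  define Ac :: "complex mat" where "Ac = map_mat of_int A"
  define y where "y = vec n (\<lambda>i. x (xs!i))"
  have A: "A \<in> carrier_mat n n" by (simp add: A_def)
  have Ac: "Ac \<in> carrier_mat n n" by (simp add: Ac_def A_def)
  have bij: "bij_betw (\<lambda>j. xs!j) {0..<n} I"
    using xs by (simp add: n_def bij_betw_def inj_on_def nth_eq_iff_index_eq set_conv_nth) (auto simp: set_conv_nth)
  have "Ac *\<^sub>v y = lam \<cdot>\<^sub>v y"
  proof (rule eq_vecI)
    fix i assume "i < dim_vec (lam \<cdot>\<^sub>v y)"
    then have i: "i < n" by (simp add: y_def)
    then have xi: "xs ! i \<in> I" using xs by (auto simp: n_def)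
    have "(Ac *\<^sub>v y) $ i = (\<Sum>j\<in>{0..<n}. of_int (N (xs!i) (xs!j)) * x (xs!j))"
      using i by (simp add: Ac_def A_def y_def mult_mat_vec_def scalar_prod_def)
    also have "\<dots> = (\<Sum>l\<in>I. of_int (N (xs!i) l) * x l)"
      by (rule sum.reindex_bij_betw[OF bij, where g = "\<lambda>l. of_int (N (xs!i) l) * x l"])
    also have "\<dots> = lam * x (xs!i)" by (rule ev[OF xi])
    finally show "(Ac *\<^sub>v y) $ i = (lam \<cdot>\<^sub>v y) $ i" using i by (simp add: y_def)
  qed (simp add: Ac_def A_def y_def)
  moreover have "y \<noteq> 0\<^sub>v n"
  proof
    assume "y = 0\<^sub>v n"
    obtain k where k: "k < n" "xs ! k = i0" using i0(1) xs by (auto simp: n_def in_set_conv_nth)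
    have "y $ k = 0" using \<open>y = 0\<^sub>v n\<close> k by simp
    then show False using k i0 by (simp add: y_def)
  qed
  moreover have "y \<in> carrier_vec n" by (simp add: y_def)
  ultimately have "eigenvalue Ac lam"
    unfolding eigenvalue_def eigenvector_def using Ac by auto
  then have "poly (char_poly Ac) lam = 0" using eigenvalue_root_char_poly[OF Ac] by simp
  also have "char_poly Ac = map_poly of_int (char_poly A)"
    unfolding Ac_def by (rule of_int_hom.char_poly_hom[OF A])
  finally have r: "poly (map_poly of_int (char_poly A)) lam = 0" .
  have "lead_coeff (char_poly A) = 1" using degree_monic_char_poly[OF A] by simp
  with r show ?thesis unfolding algebraic_int_altdef_ipoly by blast
qed

lemma eig_sq:
  fixes I :: "'a set" and N :: "'a \<Rightarrow> 'a \<Rightarrow> int" and x :: "'a \<Rightarrow> complex"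
  assumes ev: "\<And>i. i \<in> I \<Longrightarrow> (\<Sum>l\<in>I. of_int (N i l) * x l) = lam * x i"
  shows "\<And>i. i \<in> I \<Longrightarrow> (\<Sum>l\<in>I. of_int (\<Sum>m\<in>I. N i m * N m l) * x l) = lam^2 * x i"
proof -
  fix i assume i: "i \<in> I"
  have "(\<Sum>l\<in>I. of_int (\<Sum>m\<in>I. N i m * N m l) * x l) = (\<Sum>m\<in>I. of_int (N i m) * (\<Sum>l\<in>I. of_int (N m l) * x l))"
    by (simp add: sum_distrib_left sum_distrib_right algebra_simps) (rule sum.swap)
  also have "\<dots> = (\<Sum>m\<in>I. of_int (N i m) * (lam * x m))" by (intro sum.cong refl) (simp add: ev)
  also have "\<dots> = lam * (\<Sum>m\<in>I. of_int (N i m) * x m)" by (simp add: sum_distrib_left algebra_simps)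
  also have "\<dots> = lam^2 * x i" by (simp add: ev[OF i] power2_eq_square)
  finally show "(\<Sum>l\<in>I. of_int (\<Sum>m\<in>I. N i m * N m l) * x l) = lam^2 * x i" .
qed

lemma diff_sq_algint:
  fixes V :: "nat set" and Mi :: "nat \<Rightarrow> nat \<Rightarrow> int" and v v' :: "nat \<Rightarrow> complex" and \<theta> \<theta>' :: complex
  assumes fin: "finite V"
    and v: "j \<in> V" "v j \<noteq> 0" "\<And>i. i \<in> V \<Longrightarrow> (\<Sum>l\<in>V. of_int (Mi i l) * v l) = \<theta> * v i"
    and v': "j' \<in> V" "v' j' \<noteq> 0" "\<And>i. i \<in> V \<Longrightarrow> (\<Sum>l\<in>V. of_int (Mi i l) * v' l) = \<theta>' * v' i"
  shows "algebraic_int ((\<theta> - \<theta>')^2)"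
proof -
  define N :: "nat \<times> nat \<Rightarrow> nat \<times> nat \<Rightarrow> int" where
    "N = (\<lambda>(i,j) (l,m). (if j = m then Mi i l else 0) - (if i = l then Mi j m else 0))"
  define x where "x = (\<lambda>(i,j). v i * v' j)"
  have ev: "(\<Sum>lm\<in>V\<times>V. of_int (N ij lm) * x lm) = (\<theta> - \<theta>') * x ij" if ij: "ij \<in> V \<times> V" for ij
  proof -
    obtain i j where ij': "ij = (i,j)" "i \<in> V" "j \<in> V" using ij by auto
    have pt: "of_int (N (i,j) (l,m)) * x (l,m) = (if j = m then of_int (Mi i l) * v l * v' j else 0)
        - (if i = l then v i * (of_int (Mi j m) * v' m) else 0)" for l m
      by (simp add: N_def x_def algebra_simps)
    have "(\<Sum>lm\<in>V\<times>V. of_int (N ij lm) * x lm) = (\<Sum>l\<in>V. \<Sum>m\<in>V. of_int (N (i,j) (l,m)) * x (l,m))"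
      by (simp add: ij' sum.cartesian_product)
    also have "\<dots> = (\<Sum>l\<in>V. (\<Sum>m\<in>V. if j = m then of_int (Mi i l) * v l * v' j else 0)
        - (\<Sum>m\<in>V. if i = l then v i * (of_int (Mi j m) * v' m) else 0))"
      by (simp only: pt sum_subtractf)
    also have "\<dots> = (\<Sum>l\<in>V. of_int (Mi i l) * v l * v' j - (if i = l then v i * (\<Sum>m\<in>V. of_int (Mi j m) * v' m) else 0))"
      using fin ij' by (intro sum.cong refl) (simp add: sum_distrib_left)
    also have "\<dots> = (\<Sum>l\<in>V. of_int (Mi i l) * v l) * v' j - v i * (\<Sum>m\<in>V. of_int (Mi j m) * v' m)"
      using fin ij' by (simp add: sum_subtractf sum_distrib_right)
    also have "\<dots> = (\<theta> - \<theta>') * x ij" using ij' by (simp add: v(3) v'(3) x_def) (simp add: algebra_simps)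
    finally show ?thesis .
  qed
  have ev2: "\<And>ij. ij \<in> V\<times>V \<Longrightarrow> (\<Sum>lm\<in>V\<times>V. of_int (\<Sum>c\<in>V\<times>V. N ij c * N c lm) * x lm) = ((\<theta>-\<theta>')^2) * x ij"
    using eig_sq[of "V\<times>V" N x "\<theta>-\<theta>'"] ev by blast
  have "x (j,j') \<noteq> 0" using v v' by (simp add: x_def)
  then show ?thesis using fin v(1) v'(1) by (intro eig_int_algint[OF _ _ _ ev2]) auto
qed


lemma sumsq_identity:
  fixes S :: "complex set"
  shows "(\<Sum>a\<in>S. \<Sum>b\<in>S. (a - b)^2) = 2 * of_nat (card S) * (\<Sum>a\<in>S. a^2) - 2 * (\<Sum>S)^2"
proof -
  have "(\<Sum>a\<in>S. \<Sum>b\<in>S. (a - b)^2) = (\<Sum>a\<in>S. \<Sum>b\<in>S. a^2 + b^2 - 2 * (a * b))"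
    by (simp add: power2_diff mult.assoc)
  also have "\<dots> = (\<Sum>a\<in>S. of_nat (card S) * a^2 + (\<Sum>b\<in>S. b^2) - 2 * (a * (\<Sum>S)))"
    by (simp add: sum_subtractf sum.distrib sum_distrib_left)
  also have "\<dots> = 2 * of_nat (card S) * (\<Sum>a\<in>S. a^2) - 2 * (\<Sum>S)^2"
    by (simp add: sum_subtractf sum.distrib sum_distrib_left sum_distrib_right power2_eq_square algebra_simps)
  finally show ?thesis .
qed

lemma count_lemma:
  fixes S :: "complex set" and K :: nat and \<kappa> :: real and thz :: complex
  assumes fin: "finite S" and real: "\<And>\<theta>. \<theta> \<in> S \<Longrightarrow> Im \<theta> = 0"
    and bnd: "\<And>\<theta>. \<theta> \<in> S \<Longrightarrow> \<bar>Re \<theta>\<bar> \<le> real K"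
    and lat: "\<And>\<theta>. \<theta> \<in> S \<Longrightarrow> \<exists>n::int. \<theta> = thz + of_int n * of_real \<kappa>"
    and P1: "\<Sum>S \<in> \<rat>" and P2: "(\<Sum>\<theta>\<in>S. \<theta>^2) \<in> \<rat>"
    and ai: "\<And>a b. a \<in> S \<Longrightarrow> b \<in> S \<Longrightarrow> algebraic_int ((a - b)^2)"
  shows "card S \<le> 2 * K + 1"
proof -
  have gap: "\<bar>Re a - Re b\<bar> \<ge> 1" if ab: "a \<in> S" "b \<in> S" "a \<noteq> b" for a b
  proof -
    define mm where "mm = (\<lambda>\<theta>. SOME n::int. \<theta> = thz + of_int n * of_real \<kappa>)"
    have mm: "\<theta> = thz + of_int (mm \<theta>) * of_real \<kappa>" if "\<theta> \<in> S" for \<theta>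
      unfolding mm_def using lat[OF that] by (rule someI_ex)
    have diff: "x - y = of_int (mm x - mm y) * of_real \<kappa>" if "x \<in> S" "y \<in> S" for x y
      by (subst mm[OF that(1)], subst mm[OF that(2)]) (simp add: algebra_simps)
    define R where "R = (\<Sum>x\<in>S. \<Sum>y\<in>S. (mm x - mm y)^2)"
    have "(mm a - mm b)^2 \<le> (\<Sum>y\<in>S. (mm a - mm y)^2)"
      using fin ab by (intro member_le_sum) auto
    also have "\<dots> \<le> R" unfolding R_def
      using fin ab by (intro member_le_sum[where f = "\<lambda>x. \<Sum>y\<in>S. (mm x - mm y)^2"] sum_nonneg) auto
    finally have Rge: "(mm a - mm b)^2 \<le> R" .
    have mab: "mm a \<noteq> mm b" using diff[OF ab(1,2)] ab(3) by auto
    then have "(mm a - mm b)^2 > 0" by simp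
    with Rge have Rpos: "R > 0" by linarith
    have "(\<Sum>x\<in>S. \<Sum>y\<in>S. (x - y)^2) = (\<Sum>x\<in>S. \<Sum>y\<in>S. of_int ((mm x - mm y)^2) * of_real (\<kappa>^2))"
      by (intro sum.cong refl) (simp add: diff power_mult_distrib)
    also have "\<dots> = of_int R * of_real (\<kappa>^2)"
      by (simp add: R_def sum_distrib_right)
    finally have eq: "of_int R * of_real (\<kappa>^2) = 2 * of_nat (card S) * (\<Sum>a\<in>S. a^2) - 2 * (\<Sum>S)^2"
      by (simp add: sumsq_identity)
    have "2 * of_nat (card S) * (\<Sum>a\<in>S. a^2) - 2 * (\<Sum>S)^2 \<in> \<rat>"
      using P1 P2 by (intro Rats_diff Rats_mult) auto
    with eq have "of_int R * of_real (\<kappa>^2) \<in> (\<rat> :: complex set)" by simp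
    then have "(of_real (\<kappa>^2) :: complex) \<in> \<rat>"
      using Rpos by (metis Rats_divide Rats_of_int nonzero_mult_div_cancel_left of_int_0_eq_iff order_less_irrefl)
    then have "(a - b)^2 \<in> \<rat>"
      by (simp add: diff[OF ab(1,2)] power_mult_distrib)
    with ai[OF ab(1,2)] have "(a - b)^2 \<in> \<int>" by (rule rational_algebraic_int_is_int)
    then obtain z where z: "(a - b)^2 = of_int z" by (auto elim: Ints_cases)
    have "(a - b)^2 = of_real ((Re a - Re b)^2)"
      using real[OF ab(1)] real[OF ab(2)] by (simp add: complex_eq_iff power2_eq_square)
    with z have zr: "(Re a - Re b)^2 = of_int z" by (metis of_real_eq_iff of_real_of_int_eq)
    have "Re a \<noteq> Re b" using ab real by (auto simp: complex_eq_iff)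
    then have "(Re a - Re b)^2 > 0" by simp
    with zr have "z \<ge> 1" by simp
    with zr have "(Re a - Re b)^2 \<ge> 1" by simp
    then show ?thesis by (metis abs_square_less_1 not_le)
  qed
  define g where "g = (\<lambda>\<theta>. nat \<lfloor>Re \<theta> + real K\<rfloor>)"
  have "inj_on g S"
  proof (rule inj_onI)
    fix a b assume ab: "a \<in> S" "b \<in> S" "g a = g b"
    have la: "-int K \<le> \<lfloor>Re a\<rfloor>" "-int K \<le> \<lfloor>Re b\<rfloor>"
      using bnd[OF ab(1)] bnd[OF ab(2)] by (simp_all add: le_floor_iff abs_le_iff)
    have fa: "\<lfloor>Re a + real K\<rfloor> \<ge> 0" "\<lfloor>Re b + real K\<rfloor> \<ge> 0"
      using la by simp_all
    have "\<lfloor>Re a + real K\<rfloor> = \<lfloor>Re b + real K\<rfloor>"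
      using ab(3) fa unfolding g_def by (simp only: eq_nat_nat_iff)
    then have "\<bar>Re a - Re b\<bar> < 1" by linarith
    then show "a = b" using gap ab by force
  qed
  moreover have "g ` S \<subseteq> {0..2*K}"
  proof
    fix x assume "x \<in> g ` S"
    then obtain \<theta> where t: "\<theta> \<in> S" "x = g \<theta>" by auto
    have "Re \<theta> + real K \<le> real (2*K)" using bnd[OF t(1)] by simp
    then have "\<lfloor>Re \<theta> + real K\<rfloor> \<le> int (2*K)" by linarith
    then show "x \<in> {0..2*K}" using t by (simp add: g_def)
  qed
  ultimately have "card S \<le> card {0..2*K}"
    by (intro card_inj_on_le) auto
  then show ?thesis by simp
qed


definition E2 :: "complex set \<Rightarrow> complex" where
  "E2 S = ((\<Sum>S)^2 - (\<Sum>z\<in>S. z^2)) / 2"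

lemma coeff_lin_mult_Suc: "coeff ([:-a,1:] * P) (Suc n) = coeff P n - a * (coeff P (Suc n) :: complex)"
proof -
  have "coeff ([:-a,1:] * P) (Suc n) = 1 * coeff P n + - a * coeff P (Suc n)" by simp
  then show ?thesis by simp
qed

lemma coeff_lin_mult_0: "coeff ([:-a,1:] * P) 0 = - a * (coeff P 0 :: complex)"
  by simp

lemma coeff_prod_lin:
  fixes S :: "complex set"
  assumes "finite S"
  shows "(\<forall>n>card S. coeff (\<Prod>z\<in>S. [:-z,1:]) n = 0) \<and> coeff (\<Prod>z\<in>S. [:-z,1:]) (card S) = 1 \<and>
         (card S \<ge> 1 \<longrightarrow> coeff (\<Prod>z\<in>S. [:-z,1:]) (card S - 1) = - \<Sum>S) \<and>
         (card S \<ge> 2 \<longrightarrow> coeff (\<Prod>z\<in>S. [:-z,1:]) (card S - 2) = E2 S)"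
  using assms
proof (induction S rule: finite_induct)
  case empty
  then show ?case by (auto simp: coeff_1)
next
  case (insert a S)
  define P where "P = (\<Prod>z\<in>S. [:-z,1:])"
  define c where "c = card S"
  have P': "(\<Prod>z\<in>insert a S. [:-z,1:]) = [:-a,1:] * P" using insert by (simp add: P_def)
  have cI: "card (insert a S) = Suc c" using insert by (simp add: c_def)
  note IH = insert.IH[folded P_def c_def]
  have a: "\<forall>n>Suc c. coeff ([:-a,1:] * P) n = 0"
  proof (intro allI impI)
    fix n assume "n > Suc c"
    then obtain m where "n = Suc m" "m > c" by (cases n) auto
    then show "coeff ([:-a,1:] * P) n = 0" using IH by (simp add: coeff_lin_mult_Suc)
  qed
  have b: "coeff ([:-a,1:] * P) (Suc c) = 1" using IH by (simp add: coeff_lin_mult_Suc)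
  have c: "coeff ([:-a,1:] * P) c = - \<Sum>(insert a S)"
  proof (cases c)
    case 0
    then have "S = {}" using insert(1) by (simp add: c_def)
    then show ?thesis using IH 0 by (simp add: coeff_lin_mult_0)
  next
    case (Suc c')
    then show ?thesis using IH insert(1,2) by (simp add: coeff_lin_mult_Suc)
  qed
  have e2: "E2 (insert a S) = a * \<Sum>S + E2 S"
    using insert(1,2) by (simp add: E2_def field_simps power2_eq_square)
  have d: "Suc c \<ge> 2 \<longrightarrow> coeff ([:-a,1:] * P) (Suc c - 2) = E2 (insert a S)"
  proof
    assume "Suc c \<ge> 2"
    then consider "c = 1" | c' where "c = Suc (Suc c')" by (metis One_nat_def Suc_le_D Suc_le_mono le_SucE numeral_2_eq_2 not0_implies_Suc)
    then show "coeff ([:-a,1:] * P) (Suc c - 2) = E2 (insert a S)"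
    proof cases
      case 1
      then obtain b where "S = {b}" using insert(1) by (auto simp: c_def card_Suc_eq)
      then have "E2 S = 0" by (simp add: E2_def)
      then show ?thesis using IH 1 e2 by (simp add: coeff_lin_mult_0)
    next
      case 2
      then have "Suc c - 2 = Suc c'" by simp
      then show ?thesis using IH 2 e2 by (simp add: coeff_lin_mult_Suc)
    qed
  qed
  show ?case unfolding P' cI using a b c d by simp
qed

context perq
begin

lemma degree_q_bound:
  assumes Mi: "\<And>i l. M i l = of_int (Mi i l)" and wrat: "\<And>i. w i \<in> \<rat>" and CK: "C = real K"
  shows "degree q \<le> 2 * K + 1"
proof -
  define S where "S = {z. poly q z = 0}"
  have finS: "finite S" unfolding S_def using q_nz by (rule poly_roots_finite)
  have qS: "q = (\<Prod>z\<in>S. [:-z,1:])"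
    using complex_poly_decompose_rsquarefree[OF q_rsquarefree] qmon by (simp add: S_def)
  have dq: "degree q = card S"
    by (subst qS, subst degree_prod_eq_sum_degree) (auto simp: finS)
  have Mrat: "M i l \<in> \<rat>" for i l by (simp add: Mi)
  have qrat: "coeff q k \<in> \<rat>" for k by (rule q_rat[OF Mrat wrat])
  show ?thesis
  proof (cases "card S \<le> 1")
    case True then show ?thesis using dq by simp
  next
    case False
    then have c2: "card S \<ge> 2" by simp
    obtain thz where t0: "thz \<in> S" using c2 by fastforce
    note cf = coeff_prod_lin[OF finS, folded qS]
    have P1: "\<Sum>S \<in> \<rat>"
    proof -
      have "- \<Sum>S \<in> \<rat>" using cf c2 qrat by (metis Suc_1 Suc_leD)
      then show ?thesis by (metis Rats_minus_iff)
    qed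
    have P2: "(\<Sum>z\<in>S. z^2) \<in> \<rat>"
    proof -
      have "E2 S \<in> \<rat>" using cf c2 qrat by metis
      then have "(\<Sum>S)^2 - 2 * E2 S \<in> \<rat>" using P1 by (intro Rats_diff Rats_mult Rats_power) auto
      moreover have "(\<Sum>S)^2 - 2 * E2 S = (\<Sum>z\<in>S. z^2)" by (simp add: E2_def field_simps)
      ultimately show ?thesis by simp
    qed
    have rootS: "poly q \<theta> = 0" if "\<theta> \<in> S" for \<theta> using that by (simp add: S_def)
    show ?thesis unfolding dq
    proof (rule count_lemma[OF finS _ _ _ P1 P2, where thz = thz and \<kappa> = "2 * pi / \<tau>"])
      fix \<theta> assume t: "\<theta> \<in> S"
      show "Im \<theta> = 0" by (rule root_real[OF rootS[OF t]])
      show "\<bar>Re \<theta>\<bar> \<le> real K" using root_bound[OF rootS[OF t]] abs_Re_le_cmod[of \<theta>] CK by linarith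
      show "\<exists>n::int. \<theta> = thz + of_int n * of_real (2 * pi / \<tau>)"
      proof -
        obtain v where e1: "exp (- \<i> * of_real \<tau> * \<theta>) = \<eta>" using root_eig[OF rootS[OF t]] by blast
        obtain v where e0: "exp (- \<i> * of_real \<tau> * thz) = \<eta>" using root_eig[OF rootS[OF t0]] by blast
        have r1: "\<theta> = of_real (Re \<theta>)" using root_real[OF rootS[OF t]] by (simp add: complex_eq_iff)
        have r0: "thz = of_real (Re thz)" using root_real[OF rootS[OF t0]] by (simp add: complex_eq_iff)
        have "cis (- \<tau> * Re \<theta>) = cis (- \<tau> * Re thz)"
          using e1 e0 r1 r0 by (metis cis_conv_exp mult.assoc mult_minus_left of_real_minus of_real_mult mult.commute)
        then have "cis (- \<tau> * Re \<theta> - (- \<tau> * Re thz)) = 1"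
          by (simp only: cis_divide[symmetric]) (simp add: cis_neq_zero)
        then have "cos (\<tau> * (Re thz - Re \<theta>)) = 1"
          by (simp add: complex_eq_iff algebra_simps)
        then obtain n :: int where "\<tau> * (Re thz - Re \<theta>) = n * 2 * pi" by (auto simp: cos_one_2pi_int)
        then have "Re \<theta> = Re thz + of_int (-n) * (2 * pi / \<tau>)" using tau by (simp add: field_simps)
        then have "\<theta> = thz + of_int (-n) * of_real (2 * pi / \<tau>)"
          by (subst r1, subst r0) (simp add: complex_eq_iff)
        then show ?thesis by blast
      qed
    next
      fix a b assume ab: "a \<in> S" "b \<in> S"
      obtain va where va: "supp_vec V va" "va \<noteq> (\<lambda>_. 0)" "mv V M va = (\<lambda>i. a * va i)"
        using root_eig[OF rootS[OF ab(1)]] by blast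
      obtain vb where vb: "supp_vec V vb" "vb \<noteq> (\<lambda>_. 0)" "mv V M vb = (\<lambda>i. b * vb i)"
        using root_eig[OF rootS[OF ab(2)]] by blast
      obtain ja where ja: "ja \<in> V" "va ja \<noteq> 0" using nz_supp[OF va(1,2)] by blast
      obtain jb where jb: "jb \<in> V" "vb jb \<noteq> 0" using nz_supp[OF vb(1,2)] by blast
      have ea: "(\<Sum>l\<in>V. of_int (Mi i l) * va l) = a * va i" if "i \<in> V" for i
        using fun_cong[OF va(3), of i] by (simp add: mv_def Mi)
      have eb: "(\<Sum>l\<in>V. of_int (Mi i l) * vb l) = b * vb i" if "i \<in> V" for i
        using fun_cong[OF vb(3), of i] by (simp add: mv_def Mi)
      show "algebraic_int ((a - b)^2)"
        by (rule diff_sq_algint[OF finV ja(1) ja(2) ea jb(1) jb(2) eb])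
    qed
  qed
qed

end

fun reach :: "(nat \<Rightarrow> nat \<Rightarrow> bool) \<Rightarrow> nat \<Rightarrow> nat \<Rightarrow> nat \<Rightarrow> nat \<Rightarrow> bool" where
  "reach E a b 0 u = (u = a \<or> u = b)"
| "reach E a b (Suc j) u = (reach E a b j u \<or> (\<exists>l. E u l \<and> reach E a b j l))"

lemma reach_mono: "reach E a b j u \<Longrightarrow> j \<le> j' \<Longrightarrow> reach E a b j' u"
proof (induction j' arbitrary: u)
  case 0 then show ?case by simp
next
  case (Suc j')
  show ?case
  proof (cases "j = Suc j'")
    case True then show ?thesis using Suc by simp
  next
    case False then show ?thesis using Suc by simp
  qed
qed

lemma mvp_commute_pv: "pv V M p (mvp V M m x) = mvp V M m (pv V M p x)"
  by (induction m) (simp_all add: mvp_Suc pv_mv)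

locale gr =
  fixes V :: "nat set" and E :: "nat \<Rightarrow> nat \<Rightarrow> bool" and k :: nat and a b :: nat and s :: real
    and M :: "nat \<Rightarrow> nat \<Rightarrow> complex" and \<sigma> :: complex and Mi :: "nat \<Rightarrow> nat \<Rightarrow> int"
  assumes sg: "simple_graph V E" and conn: "connected_graph V E" and val: "max_valency_le V E k"
    and aV: "a \<in> V" and bV: "b \<in> V" and ab: "a \<noteq> b" and srat: "s \<in> \<rat>" and spos: "s > 0"
    and Mint: "\<And>i l. M i l = of_int (Mi i l)"
    and Msupp: "supp_mat V M" and Msym: "\<And>i l. M i l = M l i"
    and Moff: "\<And>u l. l \<noteq> u \<Longrightarrow> M u l = \<sigma> * (if E u l then 1 else 0)"
    and sig: "\<sigma> = 1 \<or> \<sigma> = -1"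
    and rowb: "\<And>i. (\<Sum>l\<in>V. cmod (M i l)) \<le> real (2 * k)"
    and per: "periodic_vec V M (pair_state a b s)"
begin

abbreviation "w \<equiv> pair_state a b s"

lemma finV: "finite V" using sg by (simp add: simple_graph_def)
lemma Ein: "E x y \<Longrightarrow> x \<in> V \<and> y \<in> V" using sg by (simp add: simple_graph_def)
lemma Esym: "E x y \<Longrightarrow> E y x" using sg by (simp add: simple_graph_def)

lemma sw: "supp_vec V w" using aV bV by (auto simp: supp_vec_def pair_state_def)
lemma wrat: "w i \<in> \<rat>" using srat by (auto simp: pair_state_def)

lemma sig2: "\<sigma> * \<sigma> = 1" using sig by auto

lemma mvp_zero_far: "\<not> reach E a b j u \<Longrightarrow> mvp V M j w u = 0"
proof (induction j arbitrary: u)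
  case 0 then show ?case by (simp add: pair_state_def)
next
  case (Suc j)
  have "mvp V M (Suc j) w u = (\<Sum>l\<in>V. M u l * mvp V M j w l)" by (simp add: mvp_Suc mv_def)
  also have "\<dots> = 0"
  proof (intro sum.neutral ballI)
    fix l assume "l \<in> V"
    show "M u l * mvp V M j w l = 0"
    proof (cases "l = u")
      case True then show ?thesis using Suc by simp
    next
      case False
      show ?thesis
      proof (cases "E u l")
        case True then show ?thesis using Suc by auto
      next
        case False then show ?thesis using Moff[OF \<open>l \<noteq> u\<close>] by simp
      qed
    qed
  qed
  finally show ?case .
qed

lemma mvp_pos_exact:
  "reach E a b j u \<Longrightarrow> (j > 0 \<longrightarrow> \<not> reach E a b (j - 1) u) \<Longrightarrow> \<exists>r>0. \<sigma> ^ j * mvp V M j w u = of_real r"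
proof (induction j arbitrary: u)
  case 0
  then show ?case using ab spos by (auto simp: pair_state_def)
next
  case (Suc j)
  then have nr: "\<not> reach E a b j u" by simp
  define L where "L = {l\<in>V. E u l \<and> reach E a b j l}"
  have finL: "finite L" using finV by (simp add: L_def)
  have "L \<noteq> {}" using Suc.prems nr Ein by (auto simp: L_def)
  have exl: "\<exists>r>0. \<sigma> ^ j * mvp V M j w l = of_real r" if "l \<in> L" for l
  proof (rule Suc.IH)
    show "reach E a b j l" using that by (simp add: L_def)
    show "0 < j \<longrightarrow> \<not> reach E a b (j - 1) l"
    proof
      assume "0 < j"
      then obtain j' where j': "j = Suc j'" by (cases j) auto
      show "\<not> reach E a b (j - 1) l"
      proof
        assume "reach E a b (j - 1) l"
        then have "reach E a b j u" using that j' by (auto simp: L_def)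
        with nr show False by simp
      qed
    qed
  qed
  define r where "r = (\<lambda>l. SOME r. r > 0 \<and> \<sigma> ^ j * mvp V M j w l = of_real r)"
  have r: "r l > 0" "\<sigma> ^ j * mvp V M j w l = of_real (r l)" if "l \<in> L" for l
    using someI_ex[OF exl[OF that]] by (auto simp: r_def)
  have "mvp V M (Suc j) w u = (\<Sum>l\<in>V. M u l * mvp V M j w l)" by (simp add: mvp_Suc mv_def)
  also have "\<dots> = (\<Sum>l\<in>L. M u l * mvp V M j w l)"
  proof (rule sum.mono_neutral_right[OF finV])
    show "L \<subseteq> V" by (auto simp: L_def)
    show "\<forall>l\<in>V - L. M u l * mvp V M j w l = 0"
    proof
      fix l assume l: "l \<in> V - L"
      show "M u l * mvp V M j w l = 0"
      proof (cases "l = u")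
        case True then show ?thesis using mvp_zero_far[OF nr] by simp
      next
        case False
        show ?thesis
        proof (cases "E u l")
          case True
          then have "\<not> reach E a b j l" using l by (auto simp: L_def)
          then show ?thesis using mvp_zero_far by simp
        next
          case False then show ?thesis using Moff[OF \<open>l \<noteq> u\<close>] by simp
        qed
      qed
    qed
  qed
  also have "\<dots> = (\<Sum>l\<in>L. \<sigma> * mvp V M j w l)"
  proof (intro sum.cong refl)
    fix l assume "l \<in> L"
    then have "l \<noteq> u" "E u l" using sg by (auto simp: L_def simple_graph_def)
    then show "M u l * mvp V M j w l = \<sigma> * mvp V M j w l" using Moff by simp
  qed
  finally have "\<sigma> ^ Suc j * mvp V M (Suc j) w u = (\<Sum>l\<in>L. (\<sigma> * \<sigma>) * (\<sigma> ^ j * mvp V M j w l))"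
    by (simp add: sum_distrib_left algebra_simps)
  also have "\<dots> = (\<Sum>l\<in>L. of_real (r l))" using r by (simp add: sig2)
  also have "\<dots> = of_real (\<Sum>l\<in>L. r l)" by simp
  finally show ?case using r(1) finL \<open>L \<noteq> {}\<close> by (intro exI[of _ "\<Sum>l\<in>L. r l"]) (auto intro: sum_pos)
qed

lemma reach_conn: "u \<in> V \<Longrightarrow> \<exists>j. reach E a b j u"
proof -
  assume u: "u \<in> V"
  have "E\<^sup>*\<^sup>* a u" using conn aV u by (simp add: connected_graph_def)
  then show ?thesis
  proof (induction rule: rtranclp_induct)
    case base then show ?case by (intro exI[of _ 0]) simp
  next
    case (step y z)
    then obtain j where "reach E a b j y" by blast
    then have "reach E a b (Suc j) z" using Esym[OF step(2)] by auto
    then show ?case by blast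
  qed
qed

lemma cardV: "card V \<le> 2 * (k + 1) ^ (4 * k)"
proof -
  obtain \<tau> \<eta> where tau: "\<tau> > 0" and eta: "cmod \<eta> = 1"
    and pe: "\<forall>i\<in>V. (\<Sum>j\<in>V. evol V M \<tau> i j * w j) = \<eta> * w i"
    using per by (auto simp: periodic_vec_def)
  interpret bnd V M "real (2 * k)" by unfold_locales (simp add: finV, rule rowb)
  have Uw: "Uv V M \<tau> w = (\<lambda>i. \<eta> * w i)"
  proof
    fix i show "Uv V M \<tau> w i = \<eta> * w i"
    proof (cases "i \<in> V")
      case True then show ?thesis using pe evol_Uv by simp
    next
      case False
      have "mvp V M m w i = 0" for m using supp_mvp[OF Msupp sw] False by (simp add: supp_vec_def)
      then show ?thesis using False sw by (simp add: Uv_def supp_vec_def)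
    qed
  qed
  obtain q where qmon: "lead_coeff q = 1" and qann: "pv V M q w = (\<lambda>_. 0)"
    and qmin: "\<forall>p. pv V M p w = (\<lambda>_. 0) \<and> degree p < degree q \<longrightarrow> p = 0"
    using minpoly_exists[OF finV Msupp sw] by blast
  interpret perq V M "real (2 * k)" w \<tau> \<eta> q
    by unfold_locales (use Msupp Msym tau eta Uw qmon qann qmin sw in \<open>auto simp: Mint\<close>)
  have dq: "degree q \<le> 2 * (2 * k) + 1"
    by (rule degree_q_bound[OF Mint wrat]) simp
  define d where "d = degree q"
  have radius: "reach E a b (4 * k) u" if u: "u \<in> V" for u
  proof -
    obtain j where "reach E a b j u" using reach_conn[OF u] by blast
    define j0 where "j0 = (LEAST j. reach E a b j u)"
    have rj0: "reach E a b j0 u" unfolding j0_def by (rule LeastI) fact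
    have nless: "\<not> reach E a b j' u" if "j' < j0" for j' using that unfolding j0_def by (rule not_less_Least)
    have "j0 < d"
    proof (rule ccontr)
      assume "\<not> j0 < d"
      then have jd: "d \<le> j0" by simp
      have "pv V M q (mvp V M (j0 - d) w) u = 0" by (simp add: mvp_commute_pv qann)
      then have "(\<Sum>i\<le>d. coeff q i * mvp V M (i + (j0 - d)) w u) = 0"
        by (simp add: pv_sum_coeff d_def mvp_add)
      also have "(\<Sum>i\<le>d. coeff q i * mvp V M (i + (j0 - d)) w u) = mvp V M j0 w u"
      proof -
        have "(\<Sum>i\<le>d. coeff q i * mvp V M (i + (j0 - d)) w u) = (\<Sum>i<d. coeff q i * mvp V M (i + (j0 - d)) w u) + coeff q d * mvp V M (d + (j0 - d)) w u"
          by (simp add: lessThan_Suc_atMost[symmetric])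
        also have "(\<Sum>i<d. coeff q i * mvp V M (i + (j0 - d)) w u) = 0"
          using jd by (intro sum.neutral ballI) (simp add: mvp_zero_far nless)
        finally show ?thesis using jd qmon by (simp add: d_def)
      qed
      finally have z: "mvp V M j0 w u = 0" .
      have "0 < j0 \<longrightarrow> \<not> reach E a b (j0 - 1) u" using nless by simp
      then obtain r where "r > 0" "\<sigma> ^ j0 * mvp V M j0 w u = of_real r"
        using mvp_pos_exact[OF rj0] by blast
      with z show False by simp
    qed
    then have "j0 \<le> 4 * k" using dq by (simp add: d_def)
    then show ?thesis using reach_mono[OF rj0] by blast
  qed
  have rc: "card {u\<in>V. reach E a b j u} \<le> 2 * (k + 1) ^ j" for j
  proof (induction j)
    case 0
    have "{u\<in>V. reach E a b 0 u} \<subseteq> {a, b}" by auto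
    then have "card {u\<in>V. reach E a b 0 u} \<le> card {a, b}" by (intro card_mono) auto
    also have "\<dots> \<le> 2" by (simp add: card_insert_if)
    finally show ?case by simp
  next
    case (Suc j)
    let ?R = "{u\<in>V. reach E a b j u}"
    have sub: "{u\<in>V. reach E a b (Suc j) u} \<subseteq> ?R \<union> (\<Union>l\<in>?R. {u\<in>V. E l u})"
    proof
      fix u assume u: "u \<in> {u\<in>V. reach E a b (Suc j) u}"
      show "u \<in> ?R \<union> (\<Union>l\<in>?R. {u\<in>V. E l u})"
      proof (cases "reach E a b j u")
        case True then show ?thesis using u by auto
      next
        case False
        then obtain l where l: "E u l" "reach E a b j l" using u by auto
        then have "l \<in> ?R" "E l u" using Ein[OF l(1)] Esym[OF l(1)] by auto
        then show ?thesis using u by auto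
      qed
    qed
    have nb: "card {u\<in>V. E l u} \<le> k" if "l \<in> ?R" for l
      using val that by (auto simp: max_valency_le_def Defs.degree_def)
    have "card {u\<in>V. reach E a b (Suc j) u} \<le> card (?R \<union> (\<Union>l\<in>?R. {u\<in>V. E l u}))"
      by (rule card_mono) (use finV sub in auto)
    also have "\<dots> \<le> card ?R + card (\<Union>l\<in>?R. {u\<in>V. E l u})" by (rule card_Un_le)
    also have "card (\<Union>l\<in>?R. {u\<in>V. E l u}) \<le> (\<Sum>l\<in>?R. card {u\<in>V. E l u})"
      by (rule card_UN_le) (use finV in auto)
    also have "\<dots> \<le> (\<Sum>l\<in>?R. k)" by (rule sum_mono) (rule nb)
    also have "\<dots> = card ?R * k" by simp
    finally have "card {u\<in>V. reach E a b (Suc j) u} \<le> card ?R * (k + 1)" by (simp add: algebra_simps)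
    also have "\<dots> \<le> 2 * (k + 1) ^ j * (k + 1)" using Suc by (intro mult_right_mono) auto
    finally show ?case by (simp add: algebra_simps)
  qed
  have "V = {u\<in>V. reach E a b (4 * k) u}" using radius by auto
  then show ?thesis using rc[of "4 * k"] by simp
qed

end


lemma fin_iso_classes:
  assumes "\<And>V E. P V E \<Longrightarrow> finite V \<and> card V \<le> N \<and> (\<forall>x y. E x y \<longrightarrow> x \<in> V \<and> y \<in> V)"
  shows "finitely_many_iso_classes P"
proof -
  define S :: "graph set" where
    "S = (\<lambda>(m, R). ({0..<m}, \<lambda>x y. (x, y) \<in> R)) ` ({..N} \<times> Pow ({..<N} \<times> {..<N}))"
  have "finite S" unfolding S_def by simp
  moreover have "\<exists>G\<in>S. graph_iso (V, E) G" if "P V E" for V E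
  proof -
    from assms[OF that] have fin: "finite V" and cV: "card V \<le> N" and EV: "\<forall>x y. E x y \<longrightarrow> x \<in> V \<and> y \<in> V" by auto
    obtain f where f: "bij_betw f V {0..<card V}" using ex_bij_betw_finite_nat[OF fin] by blast
    define R where "R = {(f x, f y) | x y. x \<in> V \<and> y \<in> V \<and> E x y}"
    have fV: "f x < card V" if "x \<in> V" for x using f that by (auto simp: bij_betw_def)
    have RN: "R \<subseteq> {..<N} \<times> {..<N}" using fV cV by (fastforce simp: R_def)
    have G: "({0..<card V}, \<lambda>x y. (x, y) \<in> R) \<in> S"
      unfolding S_def using cV RN by (intro image_eqI[of _ _ "(card V, R)"]) auto
    have inj: "inj_on f V" using f by (simp add: bij_betw_def)
    have "graph_iso (V, E) ({0..<card V}, \<lambda>x y. (x, y) \<in> R)"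
      unfolding graph_iso_def
    proof (intro exI[of _ f] conjI)
      show "bij_betw f (fst (V, E)) (fst ({0..<card V}, \<lambda>x y. (x, y) \<in> R))" using f by simp
      show "\<forall>x\<in>fst (V, E). \<forall>y\<in>fst (V, E). snd (V, E) x y = snd ({0..<card V}, \<lambda>x y. (x, y) \<in> R) (f x) (f y)"
      proof (intro ballI)
        fix x y assume xy: "x \<in> fst (V, E)" "y \<in> fst (V, E)"
        show "snd (V, E) x y = snd ({0..<card V}, \<lambda>x y. (x, y) \<in> R) (f x) (f y)"
        proof
          assume "snd (V, E) x y" then show "snd ({0..<card V}, \<lambda>x y. (x, y) \<in> R) (f x) (f y)"
            using xy by (auto simp: R_def)
        next
          assume "snd ({0..<card V}, \<lambda>x y. (x, y) \<in> R) (f x) (f y)"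
          then obtain x' y' where "x' \<in> V" "y' \<in> V" "E x' y'" "f x = f x'" "f y = f y'" by (auto simp: R_def)
          then show "snd (V, E) x y" using inj xy by (auto dest: inj_onD)
        qed
      qed
    qed
    with G show ?thesis by blast
  qed
  ultimately show ?thesis unfolding finitely_many_iso_classes_def by blast
qed

lemma degree_le:
  assumes "simple_graph V E" "max_valency_le V E k"
  shows "Defs.degree V E i \<le> k"
proof (cases "i \<in> V")
  case True then show ?thesis using assms by (simp add: max_valency_le_def)
next
  case False
  then have "{u\<in>V. E i u} = {}" using assms by (auto simp: simple_graph_def)
  then show ?thesis by (metis card.empty Defs.degree_def zero_le)
qed

lemma sum_adj: "finite V \<Longrightarrow> (\<Sum>l\<in>V. cmod (adj_mat V E i l)) = real (Defs.degree V E i)"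
proof -
  assume fin: "finite V"
  have "(\<Sum>l\<in>V. cmod (adj_mat V E i l)) = (\<Sum>l\<in>V. if E i l then 1 else 0)"
    by (intro sum.cong refl) (simp add: Defs.adj_mat_def)
  also have "\<dots> = real (card {l\<in>V. E i l})" using fin by (simp add: sum.If_cases Int_def conj_commute)
  finally show ?thesis by (simp add: Defs.degree_def)
qed

lemma sum_deg: "finite V \<Longrightarrow> (\<Sum>l\<in>V. cmod (deg_mat V E i l)) \<le> real (Defs.degree V E i)"
proof -
  assume fin: "finite V"
  have "(\<Sum>l\<in>V. cmod (deg_mat V E i l)) = (\<Sum>l\<in>V. if i = l then real (Defs.degree V E i) else 0)"
    by (intro sum.cong refl) (simp add: deg_mat_def)
  also have "\<dots> \<le> real (Defs.degree V E i)" using fin by (simp add: sum.delta)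
  finally show ?thesis .
qed

lemma mat_props:
  assumes sg: "simple_graph V E" and val: "max_valency_le V E k"
  shows adj_supp: "supp_mat V (adj_mat V E)"
    and adj_sym: "\<And>i l. adj_mat V E i l = adj_mat V E l i"
    and adj_off: "\<And>u l. l \<noteq> u \<Longrightarrow> adj_mat V E u l = 1 * (if E u l then 1 else 0)"
    and adj_int: "\<And>i l. adj_mat V E i l = of_int ((\<lambda>i l. if E i l then 1 else 0) i l)"
    and adj_row: "\<And>i. (\<Sum>l\<in>V. cmod (adj_mat V E i l)) \<le> real (2 * k)"
    and lap_supp: "supp_mat V (lap_mat V E)"
    and lap_sym: "\<And>i l. lap_mat V E i l = lap_mat V E l i"
    and lap_off: "\<And>u l. l \<noteq> u \<Longrightarrow> lap_mat V E u l = -1 * (if E u l then 1 else 0)"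
    and lap_int: "\<And>i l. lap_mat V E i l = of_int ((\<lambda>i l. (if i = l then int (Defs.degree V E i) else 0) - (if E i l then 1 else 0)) i l)"
    and lap_row: "\<And>i. (\<Sum>l\<in>V. cmod (lap_mat V E i l)) \<le> real (2 * k)"
    and slap_supp: "supp_mat V (slap_mat V E)"
    and slap_sym: "\<And>i l. slap_mat V E i l = slap_mat V E l i"
    and slap_off: "\<And>u l. l \<noteq> u \<Longrightarrow> slap_mat V E u l = 1 * (if E u l then 1 else 0)"
    and slap_int: "\<And>i l. slap_mat V E i l = of_int ((\<lambda>i l. (if i = l then int (Defs.degree V E i) else 0) + (if E i l then 1 else 0)) i l)"
    and slap_row: "\<And>i. (\<Sum>l\<in>V. cmod (slap_mat V E i l)) \<le> real (2 * k)"
proof -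
  have fin: "finite V" and Ein: "\<And>x y. E x y \<Longrightarrow> x \<in> V \<and> y \<in> V" and Esym: "\<And>x y. E x y \<Longrightarrow> E y x"
    using sg by (auto simp: simple_graph_def)
  have dV: "Defs.degree V E i = 0" if "i \<notin> V" for i
  proof -
    have "{u\<in>V. E i u} = {}" using Ein that by auto
    then show ?thesis by (metis card.empty Defs.degree_def)
  qed
  have dk: "Defs.degree V E i \<le> k" for i by (rule degree_le[OF sg val])
  have asupp: "adj_mat V E i l = 0" if "i \<notin> V" for i l
    using Ein[of i l] that by (auto simp: Defs.adj_mat_def)
  have dsupp: "deg_mat V E i l = 0" if "i \<notin> V" for i l
    using dV[OF that] by (auto simp: deg_mat_def)
  show "supp_mat V (adj_mat V E)" using asupp by (simp add: supp_mat_def)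
  show "supp_mat V (lap_mat V E)" using asupp dsupp by (simp add: supp_mat_def lap_mat_def)
  show "supp_mat V (slap_mat V E)" using asupp dsupp by (simp add: supp_mat_def slap_mat_def)
  have as: "adj_mat V E i l = adj_mat V E l i" for i l using Esym[of i l] Esym[of l i] by (auto simp: Defs.adj_mat_def)
  have ds: "deg_mat V E i l = deg_mat V E l i" for i l by (auto simp: deg_mat_def)
  show "\<And>i l. adj_mat V E i l = adj_mat V E l i" by (rule as)
  show "\<And>i l. lap_mat V E i l = lap_mat V E l i" by (simp add: lap_mat_def as ds)
  show "\<And>i l. slap_mat V E i l = slap_mat V E l i" by (simp add: slap_mat_def as ds)
  show "\<And>u l. l \<noteq> u \<Longrightarrow> adj_mat V E u l = 1 * (if E u l then 1 else 0)" by (simp add: Defs.adj_mat_def)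
  show "\<And>u l. l \<noteq> u \<Longrightarrow> lap_mat V E u l = -1 * (if E u l then 1 else 0)" by (simp add: Defs.adj_mat_def lap_mat_def deg_mat_def)
  show "\<And>u l. l \<noteq> u \<Longrightarrow> slap_mat V E u l = 1 * (if E u l then 1 else 0)" by (simp add: Defs.adj_mat_def slap_mat_def deg_mat_def)
  show "\<And>i l. adj_mat V E i l = of_int ((\<lambda>i l. if E i l then 1 else 0) i l)" by (simp add: Defs.adj_mat_def)
  show "\<And>i l. lap_mat V E i l = of_int ((\<lambda>i l. (if i = l then int (Defs.degree V E i) else 0) - (if E i l then 1 else 0)) i l)"
    by (simp add: Defs.adj_mat_def lap_mat_def deg_mat_def)
  show "\<And>i l. slap_mat V E i l = of_int ((\<lambda>i l. (if i = l then int (Defs.degree V E i) else 0) + (if E i l then 1 else 0)) i l)"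
    by (simp add: Defs.adj_mat_def slap_mat_def deg_mat_def)
  show "\<And>i. (\<Sum>l\<in>V. cmod (adj_mat V E i l)) \<le> real (2 * k)"
  proof -
    fix i show "(\<Sum>l\<in>V. cmod (adj_mat V E i l)) \<le> real (2 * k)"
      using sum_adj[OF fin, of E i] dk[of i] by simp
  qed
  show "\<And>i. (\<Sum>l\<in>V. cmod (lap_mat V E i l)) \<le> real (2 * k)"
  proof -
    fix i
    have "(\<Sum>l\<in>V. cmod (lap_mat V E i l)) \<le> (\<Sum>l\<in>V. cmod (deg_mat V E i l) + cmod (adj_mat V E i l))"
      unfolding lap_mat_def by (intro sum_mono norm_triangle_ineq4)
    also have "\<dots> \<le> real (Defs.degree V E i) + real (Defs.degree V E i)"
      using sum_deg[OF fin, of E i] sum_adj[OF fin, of E i] by (simp add: sum.distrib)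
    also have "\<dots> \<le> real (2 * k)" using dk[of i] by simp
    finally show "(\<Sum>l\<in>V. cmod (lap_mat V E i l)) \<le> real (2 * k)" .
  qed
  show "\<And>i. (\<Sum>l\<in>V. cmod (slap_mat V E i l)) \<le> real (2 * k)"
  proof -
    fix i
    have "(\<Sum>l\<in>V. cmod (slap_mat V E i l)) \<le> (\<Sum>l\<in>V. cmod (deg_mat V E i l) + cmod (adj_mat V E i l))"
      unfolding slap_mat_def by (intro sum_mono norm_triangle_ineq)
    also have "\<dots> \<le> real (Defs.degree V E i) + real (Defs.degree V E i)"
      using sum_deg[OF fin, of E i] sum_adj[OF fin, of E i] by (simp add: sum.distrib)
    also have "\<dots> \<le> real (2 * k)" using dk[of i] by simp
    finally show "(\<Sum>l\<in>V. cmod (slap_mat V E i l)) \<le> real (2 * k)" .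
  qed
qed

lemma main_bound:
  assumes H: "H \<in> {adj_mat, lap_mat, slap_mat}" and srat: "s \<in> \<rat>" and spos: "s > 0"
    and P: "simple_graph V E \<and> connected_graph V E \<and> max_valency_le V E k \<and> has_periodic_pair H s V E"
  shows "finite V \<and> card V \<le> 2 * (k + 1) ^ (4 * k) \<and> (\<forall>x y. E x y \<longrightarrow> x \<in> V \<and> y \<in> V)"
proof -
  have sg: "simple_graph V E" and conn: "connected_graph V E" and val: "max_valency_le V E k"
    using P by auto
  from P obtain a b where ab: "a \<in> V" "b \<in> V" "a \<noteq> b" and per: "periodic_vec V (H V E) (pair_state a b s)"
    by (auto simp: has_periodic_pair_def)
  have fin: "finite V" and Ein: "\<forall>x y. E x y \<longrightarrow> x \<in> V \<and> y \<in> V"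
    using sg by (auto simp: simple_graph_def)
  have s1: "(1::complex) = 1 \<or> (1::complex) = -1" and s2: "(-1::complex) = 1 \<or> (-1::complex) = -1" by simp_all
  have "card V \<le> 2 * (k + 1) ^ (4 * k)"
  proof -
    consider "H = adj_mat" | "H = lap_mat" | "H = slap_mat" using H by auto
    then show ?thesis
    proof cases
      case 1
      show ?thesis
        by (rule gr.cardV[OF gr.intro[OF sg conn val ab srat spos adj_int[OF sg val] adj_supp[OF sg val]
            adj_sym[OF sg val] adj_off[OF sg val] s1 adj_row[OF sg val] per[unfolded 1]]])
    next
      case 2
      show ?thesis
        by (rule gr.cardV[OF gr.intro[OF sg conn val ab srat spos lap_int[OF sg val] lap_supp[OF sg val]
            lap_sym[OF sg val] lap_off[OF sg val] s2 lap_row[OF sg val] per[unfolded 2]]])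
    next
      case 3
      show ?thesis
        by (rule gr.cardV[OF gr.intro[OF sg conn val ab srat spos slap_int[OF sg val] slap_supp[OF sg val]
            slap_sym[OF sg val] slap_off[OF sg val] s1 slap_row[OF sg val] per[unfolded 3]]])
    qed
  qed
  then show ?thesis using fin Ein by blast
qed

theorem mainTheorem2:
  fixes k :: nat and s :: real
  assumes "k > 0" and "s \<in> \<rat>" and "s > 0"
  shows "\<forall>H\<in>{adj_mat, lap_mat, slap_mat}.
           finitely_many_iso_classes (\<lambda>V E. simple_graph V E \<and> connected_graph V E \<and>
              max_valency_le V E k \<and> has_periodic_pair H s V E)"
proof
  fix H assume H: "H \<in> {adj_mat, lap_mat, slap_mat}"
  show "finitely_many_iso_classes (\<lambda>V E. simple_graph V E \<and> connected_graph V E \<and>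
              max_valency_le V E k \<and> has_periodic_pair H s V E)"
    by (rule fin_iso_classes[where N = "2 * (k + 1) ^ (4 * k)"]) (rule main_bound[OF H assms(2,3)])
qed

end
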